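(* For $1\le i,j\le n-1$, the subspace $V^{ij}\subset V^i\otimes V^j$ is linearly spanned by the vectors $e_C^{ij}$, where $C$ ranges over the monogressive $ij$-effective orthocells.
   Context: $n\ge2$, $q\in\mathbb{C}^*$ not a root of unity. $G=\mathrm{SL}(n,\mathbb{C})$, $B$ upper triangular, $e_1,\dots,e_n$ standard basis, $G/B$ = full flags in $\mathbb{C}^n$. $S_n$ acts by permutation matrices $e_c\mapsto e_{w(c)}$; $\ell(w)$ = number of inversions. For a transposition $s=(a\,b)$, $L_s\subset G$ is the copy of $\mathrm{SL}(2)$ acting on $\mathbb{C}e_a\oplus\mathbb{C}e_b$ and fixing the other $e_c$. An orthocell is $C=\langle s_1,\dots,s_d\rangle w\subset S_n$ with $s_1,\dots,s_d$ pairwise disjoint transpositions; $s_L=\prod_{k\in L}s_k$, $\bar L=\{1,\dots,d\}\setminus L$. $C$ is monogressive if $\ell(s_Lw)=\ell(w)+|L|$ for all $L\subset\{1,\dots,d\}$ (for $w$ then the unique minimal-length element of $C$, which we always use). $E(C)=\{g_1\cdots g_dwB: g_k\in L_{s_k}\}$, $E^{DJ}=\bigcup_{C\text{ monogressive}}E(C)$. $t_i=\mathrm{diag}(1,\dots,1,q,\dots,q)$ ($i$ ones), and $\sigma_i:E^{DJ}\to E^{DJ}$ is the automorphism equal on each $E(C)$ ($C$ monogressive, minimal element $w$) to $gB\mapsto wt_iw^{-1}gB$. $V^i=\Lambda^i\mathbb{C}^n$; $\mathrm{Pl}^i:G/B\to\mathbb{P}(V^i)$ sends a flag to $[f_1\wedge\dots\wedge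 f_i]$ for a basis of its $i$-dimensional member. $e_w^i=e_{w(1)}\wedge\dots\wedge e_{w(i)}$. A monogressive orthocell $C=\langle s_1,\dots,s_d\rangle w$ is $ij$-effective if for every $k$, $s_k$ preserves neither $\{w(1),\dots,w(i)\}$ nor $\{w(1),\dots,w(j)\}$; then $e_C^{ij}=\sum_{L\subset\{1,\dots,d\}}q^{|L|}e^i_{s_{\bar L}w}\otimes e^j_{s_Lw}$. $V^{ij}$ is the linear span of all $u\otimes v$ with $[u]=\mathrm{Pl}^i(p)$, $[v]=\mathrm{Pl}^j(\sigma_i(p))$, $p\in E^{DJ}$. *)

theory Defs
  imports Complex_Main "HOL-Library.Function_Algebras" "HOL-Combinatorics.Permutations"
    "HOL-Combinatorics.Transposition"
begin

text \<open>Indices of C^n are 1..n. Matrices are functions nat => nat => complex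
  (entry in row r, column c), only the block {1..n} x {1..n} being relevant.  A point gB of G/B is represented by a matrix g; its i-dimensional
  flag member is spanned by the first i columns of g.\<close>

definition mat_mult :: "nat \<Rightarrow> (nat \<Rightarrow> nat \<Rightarrow> complex) \<Rightarrow> (nat \<Rightarrow> nat \<Rightarrow> complex) \<Rightarrow> (nat \<Rightarrow> nat \<Rightarrow> complex)" where
  "mat_mult n A B = (\<lambda>r c. \<Sum>k\<in>{1..n}. A r k * B k c)"

definition mat_id :: "nat \<Rightarrow> nat \<Rightarrow> complex" where
  "mat_id = (\<lambda>r c. if r = c then 1 else 0)"

definition perm_mat :: "(nat \<Rightarrow> nat) \<Rightarrow> nat \<Rightarrow> nat \<Rightarrow> complex" where
  "perm_mat w = (\<lambda>r c. if r = w c then 1 else 0)"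

definition t_mat :: "complex \<Rightarrow> nat \<Rightarrow> nat \<Rightarrow> nat \<Rightarrow> complex" where
  "t_mat q i = (\<lambda>r c. if r = c then (if r \<le> i then 1 else q) else 0)"

text \<open>L_s for s = (a b): the copy of SL(2) acting on C e_a + C e_b, fixing the other e_c.\<close>
definition L_sub :: "nat \<Rightarrow> nat \<times> nat \<Rightarrow> (nat \<Rightarrow> nat \<Rightarrow> complex) set" where
  "L_sub n s = (case s of (a, b) \<Rightarrow>
     {g. (\<forall>r c. c \<notin> {a, b} \<longrightarrow> g r c = mat_id r c)
       \<and> (\<forall>r c. c \<in> {a, b} \<and> r \<notin> {a, b} \<longrightarrow> g r c = 0)
       \<and> g a a * g b b - g a b * g b a = 1})"

definition perm_length :: "nat \<Rightarrow> (nat \<Rightarrow> nat) \<Rightarrow> nat" where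
  "perm_length n w = card {(a, b). a \<in> {1..n} \<and> b \<in> {1..n} \<and> a < b \<and> w a > w b}"

text \<open>An orthocell is given by a list of transpositions (a_k, b_k) (meaning s_k = (a_k b_k))
  together with w.\<close>
definition is_orthocell :: "nat \<Rightarrow> (nat \<times> nat) list \<Rightarrow> (nat \<Rightarrow> nat) \<Rightarrow> bool" where
  "is_orthocell n ts w \<longleftrightarrow> w permutes {1..n}
     \<and> (\<forall>k < length ts. fst (ts ! k) \<in> {1..n} \<and> snd (ts ! k) \<in> {1..n} \<and> fst (ts ! k) \<noteq> snd (ts ! k))
     \<and> (\<forall>k < length ts. \<forall>l < length ts. k \<noteq> l \<longrightarrow>
          {fst (ts ! k), snd (ts ! k)} \<inter> {fst (ts ! l), snd (ts ! l)} = {})"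

text \<open>s_L = product of s_k, k in L (indices 0..d-1); pairwise disjoint, so order irrelevant.\<close>
definition s_prod :: "(nat \<times> nat) list \<Rightarrow> nat set \<Rightarrow> nat \<Rightarrow> nat" where
  "s_prod ts L = foldr (\<lambda>k f. transpose (fst (ts ! k)) (snd (ts ! k)) \<circ> f)
                     (sorted_list_of_set L) id"

definition monogressive :: "nat \<Rightarrow> (nat \<times> nat) list \<Rightarrow> (nat \<Rightarrow> nat) \<Rightarrow> bool" where
  "monogressive n ts w \<longleftrightarrow> is_orthocell n ts w
     \<and> (\<forall>L \<subseteq> {0..<length ts}. perm_length n (s_prod ts L \<circ> w) = perm_length n w + card L)"

text \<open>Representatives g_1 ... g_d w of the points of E(C).\<close>
definition E_reps :: "nat \<Rightarrow> (nat \<times> nat) list \<Rightarrow> (nat \<Rightarrow> nat) \<Rightarrow> (nat \<Rightarrow> nat \<Rightarrow> complex) set" where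
  "E_reps n ts w = {mat_mult n (foldr (mat_mult n) gs mat_id) (perm_mat w) | gs.
        length gs = length ts \<and> (\<forall>k < length ts. gs ! k \<in> L_sub n (ts ! k))}"

definition det_n :: "nat \<Rightarrow> (nat \<Rightarrow> nat \<Rightarrow> complex) \<Rightarrow> complex" where
  "det_n m M = (\<Sum>p | p permutes {1..m}. of_int (sign p) * (\<Prod>r\<in>{1..m}. M r (p r)))"

text \<open>Lambda^i C^n is identified with functions on i-subsets S of {1..n} (coordinates
  w.r.t. the basis e_S = e_(s_1) wedge ... wedge e_(s_i), s_1 < ... < s_i).
  wedge n i f is f 1 wedge ... wedge f i.\<close>
definition wedge :: "nat \<Rightarrow> nat \<Rightarrow> (nat \<Rightarrow> nat \<Rightarrow> complex) \<Rightarrow> nat set \<Rightarrow> complex" where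
  "wedge n i f S = (if S \<subseteq> {1..n} \<and> card S = i
      then det_n i (\<lambda>r m. f m (sorted_list_of_set S ! (r - 1))) else 0)"

definition std_basis :: "nat \<Rightarrow> nat \<Rightarrow> complex" where
  "std_basis a = (\<lambda>r. if r = a then 1 else 0)"

text \<open>Pl^i(gB), up to scalar: wedge of the first i columns of g.\<close>
definition pl_vec :: "nat \<Rightarrow> nat \<Rightarrow> (nat \<Rightarrow> nat \<Rightarrow> complex) \<Rightarrow> nat set \<Rightarrow> complex" where
  "pl_vec n i g = wedge n i (\<lambda>m r. g r m)"

definition e_w :: "nat \<Rightarrow> nat \<Rightarrow> (nat \<Rightarrow> nat) \<Rightarrow> nat set \<Rightarrow> complex" where
  "e_w n i w = wedge n i (\<lambda>m. std_basis (w m))"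

text \<open>V^i tensor V^j as functions on pairs of subsets.\<close>
definition tensor :: "(nat set \<Rightarrow> complex) \<Rightarrow> (nat set \<Rightarrow> complex) \<Rightarrow> nat set \<times> nat set \<Rightarrow> complex" where
  "tensor u v = (\<lambda>(S, T). u S * v T)"

definition cspan :: "(nat set \<times> nat set \<Rightarrow> complex) set \<Rightarrow> (nat set \<times> nat set \<Rightarrow> complex) set" where
  "cspan = module.span (\<lambda>c f. (\<lambda>x. c * f x))"

text \<open>V^ij: span of u tensor v with [u] = Pl^i(p), [v] = Pl^j(sigma_i p), p in E^DJ; on E(C)
  (C monogressive with minimal element w), sigma_i(gB) = w t_i w^-1 g B.\<close>
definition V_ij :: "nat \<Rightarrow> complex \<Rightarrow> nat \<Rightarrow> nat \<Rightarrow> (nat set \<times> nat set \<Rightarrow> complex) set" where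
  "V_ij n q i j = cspan {tensor u v | u v. \<exists>ts w g a b.
      monogressive n ts w \<and> g \<in> E_reps n ts w \<and> a \<noteq> 0 \<and> b \<noteq> 0
      \<and> u = (\<lambda>S. a * pl_vec n i g S)
      \<and> v = (\<lambda>T. b * pl_vec n j
              (mat_mult n (mat_mult n (mat_mult n (perm_mat w) (t_mat q i)) (perm_mat (inv_into {1..n} w))) g) T)}"

definition ij_effective :: "nat \<Rightarrow> nat \<Rightarrow> nat \<Rightarrow> (nat \<times> nat) list \<Rightarrow> (nat \<Rightarrow> nat) \<Rightarrow> bool" where
  "ij_effective n i j ts w \<longleftrightarrow> monogressive n ts w \<and>
     (\<forall>k < length ts. \<forall>m \<in> {i, j}.
        transpose (fst (ts ! k)) (snd (ts ! k)) ` (w ` {1..m}) \<noteq> w ` {1..m})"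

definition e_C :: "nat \<Rightarrow> complex \<Rightarrow> nat \<Rightarrow> nat \<Rightarrow> (nat \<times> nat) list \<Rightarrow> (nat \<Rightarrow> nat)
     \<Rightarrow> nat set \<times> nat set \<Rightarrow> complex" where
  "e_C n q i j ts w = (\<Sum>L\<in>Pow {0..<length ts}.
      (\<lambda>x. q ^ card L * tensor (e_w n i (s_prod ts ({0..<length ts} - L) \<circ> w))
                              (e_w n j (s_prod ts L \<circ> w)) x))"

end

theory Submission
  imports Defs
begin

lemma det_n_cong:
  assumes "\<And>r c. r \<in> {1..t} \<Longrightarrow> c \<in> {1..t} \<Longrightarrow> M r c = M' r c"
  shows "det_n t M = det_n t M'"
  unfolding det_n_def
proof (rule sum.cong[OF refl])
  fix p assume "p \<in> {p. p permutes {1..t}}"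
  hence p: "p permutes {1..t}" by simp
  show "of_int (sign p) * (\<Prod>r\<in>{1..t}. M r (p r)) = of_int (sign p) * (\<Prod>r\<in>{1..t}. M' r (p r))"
    using assms permutes_in_image[OF p] by (intro arg_cong2[where f="(*)"] prod.cong) auto
qed

lemma det_n_swap:
  assumes "m0 \<in> {1..t}" "m1 \<in> {1..t}" "m0 \<noteq> m1"
  shows "det_n t (\<lambda>r c. M r (transpose m0 m1 c)) = - det_n t M"
proof -
  let ?P = "{p. p permutes {1..t}}"
  let ?tau = "transpose m0 m1"
  have tp: "?tau permutes {1..t}" using assms by (simp add: permutes_swap_id)
  have sg: "sign (?tau \<circ> p) = - sign p" if "p permutes {1..t}" for p
  proof -
    have "permutation p" using that permutation_permutes by blast
    moreover have "permutation ?tau" using tp permutation_permutes by blast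
    ultimately show ?thesis using assms(3) by (simp add: sign_compose sign_swap_id)
  qed
  have "det_n t (\<lambda>r c. M r (?tau c)) = (\<Sum>p\<in>?P. - (of_int (sign p) * (\<Prod>r\<in>{1..t}. M r (p r))))"
    unfolding det_n_def
  proof (rule sum.reindex_bij_witness[where i="\<lambda>p. ?tau \<circ> p" and j="\<lambda>p. ?tau \<circ> p"])
    fix p assume "p \<in> ?P"
    show "?tau \<circ> (?tau \<circ> p) = p" by (simp add: fun_eq_iff)
    show "?tau \<circ> p \<in> ?P" using \<open>p \<in> ?P\<close> tp by (simp add: permutes_compose)
    show "?tau \<circ> (?tau \<circ> p) = p" by (simp add: fun_eq_iff)
    show "?tau \<circ> p \<in> ?P" using \<open>p \<in> ?P\<close> tp by (simp add: permutes_compose)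
    show "- (of_int (sign (?tau \<circ> p)) * (\<Prod>r\<in>{1..t}. M r ((?tau \<circ> p) r))) =
        of_int (sign p) * (\<Prod>r\<in>{1..t}. M r (?tau (p r)))"
      using sg \<open>p \<in> ?P\<close> by simp
  qed
  also have "\<dots> = - det_n t M" unfolding det_n_def by (simp add: sum_negf)
  finally show ?thesis .
qed

lemma det_n_eq0:
  assumes "m0 \<in> {1..t}" "m1 \<in> {1..t}" "m0 \<noteq> m1" "\<And>r. M r m0 = M r m1"
  shows "det_n t M = 0"
proof -
  have "(\<lambda>r c. M r (transpose m0 m1 c)) = M"
    using assms(4) by (auto simp: fun_eq_iff transpose_def)
  hence "det_n t M = - det_n t M" using det_n_swap[OF assms(1-3), of M] by simp
  thus ?thesis by simp
qed

lemma det_n_lin: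
  assumes c0: "c0 \<in> {1..t}" and M: "\<And>r. M r c0 = \<alpha> * A r + \<beta> * B r"
  shows "det_n t M = \<alpha> * det_n t (\<lambda>r c. if c = c0 then A r else M r c)
                    + \<beta> * det_n t (\<lambda>r c. if c = c0 then B r else M r c)"
proof -
  let ?M1 = "\<lambda>r c. if c = c0 then A r else M r c"
  let ?M2 = "\<lambda>r c. if c = c0 then B r else M r c"
  have key: "(\<Prod>r\<in>{1..t}. M r (p r)) = \<alpha> * (\<Prod>r\<in>{1..t}. ?M1 r (p r)) + \<beta> * (\<Prod>r\<in>{1..t}. ?M2 r (p r))"
    if p: "p permutes {1..t}" for p
  proof -
    obtain r0 where r0: "r0 \<in> {1..t}" "p r0 = c0"
      using c0 permutes_image[OF p] by (metis imageE)
    have oth: "p r \<noteq> c0" if "r \<noteq> r0" for r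
      using permutes_inj[OF p] r0 that by (metis injD)
    have e1: "(\<Prod>r\<in>{1..t}. F r) = F r0 * (\<Prod>r\<in>{1..t}-{r0}. F r)" for F :: "nat \<Rightarrow> complex"
      using r0(1) by (simp add: prod.remove)
    have e2: "(\<Prod>r\<in>{1..t}-{r0}. ?M1 r (p r)) = (\<Prod>r\<in>{1..t}-{r0}. M r (p r))"
      "(\<Prod>r\<in>{1..t}-{r0}. ?M2 r (p r)) = (\<Prod>r\<in>{1..t}-{r0}. M r (p r))"
      using oth by (auto intro!: prod.cong)
    show ?thesis
      apply (subst (1 2 3) e1) using e2 r0 M by (simp add: algebra_simps)
  qed
  have "det_n t M = (\<Sum>p | p permutes {1..t}. \<alpha> * (of_int (sign p) * (\<Prod>r\<in>{1..t}. ?M1 r (p r)))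
      + \<beta> * (of_int (sign p) * (\<Prod>r\<in>{1..t}. ?M2 r (p r))))"
    unfolding det_n_def apply (rule sum.cong[OF refl])
    subgoal for p using key[of p] by (simp add: distrib_left mult.left_commute)
    done
  thus ?thesis unfolding det_n_def by (simp add: sum.distrib sum_distrib_left)
qed

lemma det_n_scale:
  "det_n t (\<lambda>r c. \<gamma> c * M r c) = (\<Prod>c\<in>{1..t}. \<gamma> c) * det_n t M"
proof -
  have "(\<Prod>r\<in>{1..t}. \<gamma> (p r) * M r (p r)) = (\<Prod>c\<in>{1..t}. \<gamma> c) * (\<Prod>r\<in>{1..t}. M r (p r))"
    if p: "p permutes {1..t}" for p
  proof -
    have "(\<Prod>r\<in>{1..t}. \<gamma> (p r)) = (\<Prod>c\<in>{1..t}. \<gamma> c)"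
      using prod.permute[OF p, of \<gamma>] by (simp add: o_def)
    thus ?thesis by (simp add: prod.distrib)
  qed
  hence "det_n t (\<lambda>r c. \<gamma> c * M r c) = (\<Sum>p | p permutes {1..t}. (\<Prod>c\<in>{1..t}. \<gamma> c) * (of_int (sign p) * (\<Prod>r\<in>{1..t}. M r (p r))))"
    unfolding det_n_def by (intro sum.cong) (simp_all add: algebra_simps)
  thus ?thesis unfolding det_n_def by (simp add: sum_distrib_left)
qed

lemma sl_mem:
  fixes S :: "nat set"
  assumes "S \<subseteq> {1..n}" "card S = t" "r \<in> {1..t}"
  shows "sorted_list_of_set S ! (r - 1) \<in> S"
proof -
  have "finite S" using assms(1) finite_subset by blast
  hence "length (sorted_list_of_set S) = t" using assms(2) by simp
  hence "r - 1 < length (sorted_list_of_set S)" using assms(3) by auto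
  hence "sorted_list_of_set S ! (r - 1) \<in> set (sorted_list_of_set S)" by (rule nth_mem)
  thus ?thesis using \<open>finite S\<close> by simp
qed

lemma wedge_cong:
  assumes "\<And>m r. m \<in> {1..t} \<Longrightarrow> r \<in> {1..n} \<Longrightarrow> f m r = f' m r"
  shows "wedge n t f S = wedge n t f' S"
proof (cases "S \<subseteq> {1..n} \<and> card S = t")
  case True
  have "det_n t (\<lambda>r m. f m (sorted_list_of_set S ! (r - 1))) = det_n t (\<lambda>r m. f' m (sorted_list_of_set S ! (r - 1)))"
  proof (rule det_n_cong)
    fix r c assume rc: "r \<in> {1..t}" "c \<in> {1..t}"
    have "sorted_list_of_set S ! (r - 1) \<in> S" using True rc(1) by (intro sl_mem[of S n t]) auto
    hence "sorted_list_of_set S ! (r - 1) \<in> {1..n}" using True by blast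
    thus "f c (sorted_list_of_set S ! (r - 1)) = f' c (sorted_list_of_set S ! (r - 1))"
      using assms rc(2) by blast
  qed
  thus ?thesis unfolding wedge_def using True by simp
next
  case False show ?thesis unfolding wedge_def if_not_P[OF False] by (rule refl)
qed

lemma wedge_swap:
  assumes "m0 \<in> {1..t}" "m1 \<in> {1..t}" "m0 \<noteq> m1"
  shows "wedge n t (f \<circ> transpose m0 m1) S = - wedge n t f S"
  unfolding wedge_def using det_n_swap[OF assms, of "\<lambda>r m. f m (sorted_list_of_set S ! (r - 1))"]
  by simp

lemma wedge_eq0:
  assumes "m0 \<in> {1..t}" "m1 \<in> {1..t}" "m0 \<noteq> m1" "f m0 = f m1"
  shows "wedge n t f S = 0"
  unfolding wedge_def using det_n_eq0[OF assms(1-3), of "\<lambda>r m. f m (sorted_list_of_set S ! (r - 1))"] assms(4)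
  by simp

lemma wedge_lin:
  assumes "m0 \<in> {1..t}" "f m0 = (\<lambda>r. \<alpha> * A r + \<beta> * B r)"
  shows "wedge n t f S = \<alpha> * wedge n t (f(m0 := A)) S + \<beta> * wedge n t (f(m0 := B)) S"
proof -
  have e: "(\<lambda>r c. if c = m0 then X (sorted_list_of_set S ! (r - 1)) else f c (sorted_list_of_set S ! (r - 1)))
     = (\<lambda>r m. (f(m0 := X)) m (sorted_list_of_set S ! (r - 1)))" for X
    by (auto simp: fun_eq_iff)
  show ?thesis unfolding wedge_def
    using det_n_lin[OF assms(1), of "\<lambda>r m. f m (sorted_list_of_set S ! (r - 1))" \<alpha>
        "\<lambda>r. A (sorted_list_of_set S ! (r - 1))" \<beta> "\<lambda>r. B (sorted_list_of_set S ! (r - 1))"] assms(2)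
    by (simp add: e)
qed

lemma wedge_scale:
  "wedge n t (\<lambda>m r. \<gamma> m * f m r) S = (\<Prod>m\<in>{1..t}. \<gamma> m) * wedge n t f S"
  unfolding wedge_def using det_n_scale[of t \<gamma> "\<lambda>r m. f m (sorted_list_of_set S ! (r - 1))"]
  by simp

definition blocks_ok :: "nat \<Rightarrow> (nat \<times> nat) list \<Rightarrow> bool" where
  "blocks_ok n ts \<longleftrightarrow> (\<forall>k < length ts. fst (ts ! k) \<in> {1..n} \<and> snd (ts ! k) \<in> {1..n} \<and> fst (ts ! k) \<noteq> snd (ts ! k))
     \<and> (\<forall>k < length ts. \<forall>l < length ts. k \<noteq> l \<longrightarrow>
          {fst (ts ! k), snd (ts ! k)} \<inter> {fst (ts ! l), snd (ts ! l)} = {})"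

lemma orth_iff: "is_orthocell n ts w \<longleftrightarrow> w permutes {1..n} \<and> blocks_ok n ts"
  unfolding is_orthocell_def blocks_ok_def by blast

definition aa :: "(nat \<times> nat) list \<Rightarrow> nat \<Rightarrow> nat" where "aa ts k = fst (ts ! k)"
definition bb :: "(nat \<times> nat) list \<Rightarrow> nat \<Rightarrow> nat" where "bb ts k = snd (ts ! k)"
definition Tk :: "(nat \<times> nat) list \<Rightarrow> nat \<Rightarrow> nat \<Rightarrow> nat" where "Tk ts k = transpose (aa ts k) (bb ts k)"

definition Pm :: "(nat \<times> nat) list \<Rightarrow> (nat \<Rightarrow> nat \<Rightarrow> complex) list \<Rightarrow> nat set \<Rightarrow> nat \<Rightarrow> nat \<Rightarrow> complex" where
  "Pm ts gs K r c = (if \<exists>k\<in>K. c = aa ts k \<or> c = bb ts k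
      then (gs ! (SOME k. k \<in> K \<and> (c = aa ts k \<or> c = bb ts k))) r c else mat_id r c)"

definition gs_ok :: "nat \<Rightarrow> (nat \<times> nat) list \<Rightarrow> (nat \<Rightarrow> nat \<Rightarrow> complex) list \<Rightarrow> bool" where
  "gs_ok n ts gs \<longleftrightarrow> length gs = length ts \<and> (\<forall>k < length ts. gs ! k \<in> L_sub n (ts ! k))"

definition Xw :: "nat \<Rightarrow> nat \<Rightarrow> (nat \<Rightarrow> complex) \<Rightarrow> (nat \<times> nat) list \<Rightarrow> (nat \<Rightarrow> nat \<Rightarrow> complex) list
    \<Rightarrow> nat set \<Rightarrow> (nat \<Rightarrow> nat) \<Rightarrow> nat set \<Rightarrow> complex" where
  "Xw n t \<delta> ts gs K w = wedge n t (\<lambda>m r. \<delta> r * Pm ts gs K r (w m))"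

lemma foldr_insort_comp:
  assumes "\<forall>x\<in>set xs. F k \<circ> F x = F x \<circ> F k"
  shows "foldr (\<lambda>k f. F k \<circ> f) (insort k xs) id = F k \<circ> foldr (\<lambda>k f. F k \<circ> f) xs id"
  using assms
proof (induction xs)
  case (Cons x xs)
  show ?case
  proof (cases "k \<le> x")
    case False
    have IH: "foldr (\<lambda>k f. F k \<circ> f) (insort k xs) id = F k \<circ> foldr (\<lambda>k f. F k \<circ> f) xs id"
      by (rule Cons.IH) (use Cons.prems in simp)
    have "foldr (\<lambda>k f. F k \<circ> f) (insort k (x # xs)) id = F x \<circ> foldr (\<lambda>k f. F k \<circ> f) (insort k xs) id"
      using False by simp
    also have "\<dots> = F x \<circ> (F k \<circ> foldr (\<lambda>k f. F k \<circ> f) xs id)" by (simp only: IH)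
    also have "\<dots> = (F x \<circ> F k) \<circ> foldr (\<lambda>k f. F k \<circ> f) xs id" by (simp add: o_assoc)
    also have "\<dots> = (F k \<circ> F x) \<circ> foldr (\<lambda>k f. F k \<circ> f) xs id"
    proof -
      have "F x \<circ> F k = F k \<circ> F x" using Cons.prems by (simp add: o_def fun_eq_iff)
      thus ?thesis by (simp only:)
    qed
    also have "\<dots> = F k \<circ> (F x \<circ> foldr (\<lambda>k f. F k \<circ> f) xs id)" by (simp only: o_assoc)
    also have "\<dots> = F k \<circ> foldr (\<lambda>k f. F k \<circ> f) (x # xs) id" by simp
    finally show ?thesis .
  qed simp
qed simp

lemma Lsub_out: "g \<in> L_sub n (a, b) \<Longrightarrow> c \<noteq> a \<Longrightarrow> c \<noteq> b \<Longrightarrow> g r c = mat_id r c"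
  unfolding L_sub_def by auto
lemma Lsub_zero: "g \<in> L_sub n (a, b) \<Longrightarrow> c = a \<or> c = b \<Longrightarrow> r \<noteq> a \<Longrightarrow> r \<noteq> b \<Longrightarrow> g r c = 0"
  unfolding L_sub_def by auto
lemma Lsub_det: "g \<in> L_sub n (a, b) \<Longrightarrow> g a a * g b b - g a b * g b a = 1"
  unfolding L_sub_def by auto

locale blocks =
  fixes n :: nat and ts :: "(nat \<times> nat) list"
  assumes bok: "blocks_ok n ts"
begin

abbreviation "d \<equiv> length ts"

lemma ab_in: "k < d \<Longrightarrow> aa ts k \<in> {1..n} \<and> bb ts k \<in> {1..n} \<and> aa ts k \<noteq> bb ts k"
  using bok unfolding blocks_ok_def aa_def bb_def by blast

lemma disj: "k < d \<Longrightarrow> l < d \<Longrightarrow> k \<noteq> l \<Longrightarrow>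
   aa ts k \<noteq> aa ts l \<and> aa ts k \<noteq> bb ts l \<and> bb ts k \<noteq> aa ts l \<and> bb ts k \<noteq> bb ts l"
  using bok unfolding blocks_ok_def aa_def bb_def by blast

lemma Tk_comm: "k < d \<Longrightarrow> l < d \<Longrightarrow> Tk ts k \<circ> Tk ts l = Tk ts l \<circ> Tk ts k"
  apply (cases "k = l", simp)
  using disj[of k l] unfolding Tk_def by (auto simp: fun_eq_iff transpose_def)

lemma sp_empty: "s_prod ts {} = id"
  unfolding s_prod_def by simp

lemma sp_def': "s_prod ts L = foldr (\<lambda>k f. Tk ts k \<circ> f) (sorted_list_of_set L) id"
  unfolding s_prod_def Tk_def aa_def bb_def ..

lemma sp_insert:
  assumes "L \<subseteq> {0..<d}" "k < d" "k \<notin> L"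
  shows "s_prod ts (insert k L) = Tk ts k \<circ> s_prod ts L"
proof -
  have fin: "finite L" using assms(1) finite_subset by blast
  have "\<forall>x\<in>set (sorted_list_of_set L). Tk ts k \<circ> Tk ts x = Tk ts x \<circ> Tk ts k"
    using Tk_comm assms fin by auto
  thus ?thesis
    unfolding sp_def' sorted_list_of_set_insert[OF fin assms(3)]
    by (rule foldr_insort_comp)
qed

lemma sp_perm: "L \<subseteq> {0..<d} \<Longrightarrow> s_prod ts L permutes {1..n}"
proof (induction L rule: infinite_finite_induct)
  case (infinite L) thus ?case using finite_subset by blast
next
  case empty show ?case unfolding sp_empty by (rule permutes_id)
next
  case (insert k L)
  hence "Tk ts k permutes {1..n}" using ab_in[of k] unfolding Tk_def by (simp add: permutes_swap_id)
  hence "Tk ts k \<circ> s_prod ts L permutes {1..n}" using insert by (intro permutes_compose) auto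
  moreover have "s_prod ts (insert k L) = Tk ts k \<circ> s_prod ts L" using insert by (intro sp_insert) auto
  ultimately show ?case by (simp only:)
qed

lemma sp_union:
  "L \<subseteq> {0..<d} \<Longrightarrow> M \<subseteq> {0..<d} \<Longrightarrow> L \<inter> M = {} \<Longrightarrow> s_prod ts (L \<union> M) = s_prod ts L \<circ> s_prod ts M"
proof (induction L rule: infinite_finite_induct)
  case (infinite L) thus ?case using finite_subset by blast
next
  case empty thus ?case by (simp add: sp_empty)
next
  case (insert k L)
  have "s_prod ts (insert k L \<union> M) = s_prod ts (insert k (L \<union> M))" by simp
  also have "\<dots> = Tk ts k \<circ> s_prod ts (L \<union> M)" using insert by (intro sp_insert) auto
  also have "\<dots> = Tk ts k \<circ> (s_prod ts L \<circ> s_prod ts M)"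
  proof -
    have IH: "s_prod ts (L \<union> M) = s_prod ts L \<circ> s_prod ts M"
      by (rule insert.IH) (use insert.prems in auto)
    show ?thesis by (simp only: IH)
  qed
  also have "\<dots> = s_prod ts (insert k L) \<circ> s_prod ts M" using insert sp_insert[of L k] by (simp add: o_assoc)
  finally show ?case .
qed

lemma sp_fix:
  "L \<subseteq> {0..<d} \<Longrightarrow> (\<forall>l\<in>L. x \<noteq> aa ts l \<and> x \<noteq> bb ts l) \<Longrightarrow> s_prod ts L x = x"
proof (induction L rule: infinite_finite_induct)
  case (infinite L) thus ?case using finite_subset by blast
next
  case empty thus ?case by (simp add: sp_empty)
next
  case (insert k L)
  thus ?case using sp_insert[of L k] unfolding Tk_def by simp
qed

lemma sp_mem:
  "L \<subseteq> {0..<d} \<Longrightarrow> (\<forall>l\<in>L. x \<noteq> aa ts l \<and> x \<noteq> bb ts l) \<Longrightarrow> (x \<in> s_prod ts L ` B \<longleftrightarrow> x \<in> B)"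
proof (induction L rule: infinite_finite_induct)
  case (infinite L) thus ?case using finite_subset by blast
next
  case empty thus ?case by (simp add: sp_empty)
next
  case (insert k L)
  hence "x \<in> s_prod ts (insert k L) ` B \<longleftrightarrow> x \<in> Tk ts k ` (s_prod ts L ` B)"
    using sp_insert[of L k] by (simp add: image_comp)
  also have "\<dots> \<longleftrightarrow> x \<in> s_prod ts L ` B" using insert.prems unfolding Tk_def
    by (simp add: in_transpose_image_iff)
  finally show ?case using insert by simp
qed

lemma Pm_in:
  assumes "K \<subseteq> {0..<d}" "k \<in> K" "c = aa ts k \<or> c = bb ts k"
  shows "Pm ts gs K r c = (gs ! k) r c"
proof -
  have kd: "k < d" using assms by auto
  have "(SOME l. l \<in> K \<and> (c = aa ts l \<or> c = bb ts l)) = k"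
  proof (rule some_equality)
    show "k \<in> K \<and> (c = aa ts k \<or> c = bb ts k)" using assms by blast
  next
    fix l assume h: "l \<in> K \<and> (c = aa ts l \<or> c = bb ts l)"
    show "l = k"
    proof (rule ccontr)
      assume "l \<noteq> k"
      moreover have "l < d" using h assms(1) by auto
      ultimately have "aa ts k \<noteq> aa ts l \<and> aa ts k \<noteq> bb ts l \<and> bb ts k \<noteq> aa ts l \<and> bb ts k \<noteq> bb ts l"
        using disj[of k l] kd by simp
      thus False using h assms(3) by auto
    qed
  qed
  moreover have "\<exists>k\<in>K. c = aa ts k \<or> c = bb ts k" using assms by blast
  ultimately show ?thesis unfolding Pm_def by simp
qed

lemma Pm_out: "(\<forall>k\<in>K. c \<noteq> aa ts k \<and> c \<noteq> bb ts k) \<Longrightarrow> Pm ts gs K r c = mat_id r c"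
  unfolding Pm_def by simp

lemma Pm_remove:
  assumes "c \<noteq> aa ts k" "c \<noteq> bb ts k"
  shows "Pm ts gs K r c = Pm ts gs (K - {k}) r c"
proof -
  have e: "(\<lambda>l. l \<in> K \<and> (c = aa ts l \<or> c = bb ts l)) = (\<lambda>l. l \<in> K - {k} \<and> (c = aa ts l \<or> c = bb ts l))"
    using assms by (auto simp: fun_eq_iff)
  have e2: "(\<exists>l\<in>K. c = aa ts l \<or> c = bb ts l) = (\<exists>l\<in>K - {k}. c = aa ts l \<or> c = bb ts l)"
    using assms by auto
  show ?thesis unfolding Pm_def e e2 ..
qed

end

context blocks
begin

lemma Tk_a[simp]: "Tk ts k (aa ts k) = bb ts k" unfolding Tk_def by simp
lemma Tk_b[simp]: "Tk ts k (bb ts k) = aa ts k" unfolding Tk_def by simp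
lemma Tk_o: "x \<noteq> aa ts k \<Longrightarrow> x \<noteq> bb ts k \<Longrightarrow> Tk ts k x = x" unfolding Tk_def by simp

lemma gs_k: "gs_ok n ts gs \<Longrightarrow> k < d \<Longrightarrow> gs ! k \<in> L_sub n (aa ts k, bb ts k)"
  unfolding gs_ok_def aa_def bb_def by simp

lemma col_block:
  assumes gs: "gs_ok n ts gs" and K: "K \<subseteq> {0..<d}" "k \<in> K" and c: "c = aa ts k \<or> c = bb ts k"
  shows "(\<lambda>r. \<delta> r * Pm ts gs K r c) = (\<lambda>r. (gs ! k) c c * (\<delta> r * Pm ts gs (K - {k}) r c)
            + (gs ! k) (Tk ts k c) c * (\<delta> r * Pm ts gs (K - {k}) r (Tk ts k c)))"
    and "Pm ts gs (K - {k}) r c = mat_id r c"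
    and "Pm ts gs (K - {k}) r (Tk ts k c) = mat_id r (Tk ts k c)"
proof -
  have kd: "k < d" using K by auto
  have ab: "aa ts k \<noteq> bb ts k" using ab_in[OF kd] by simp
  have out: "\<forall>l\<in>K - {k}. y \<noteq> aa ts l \<and> y \<noteq> bb ts l" if "y = aa ts k \<or> y = bb ts k" for y
  proof
    fix l assume l: "l \<in> K - {k}"
    hence "l < d" "l \<noteq> k" using K by auto
    thus "y \<noteq> aa ts l \<and> y \<noteq> bb ts l" using disj[of k l] kd that by auto
  qed
  have tc: "Tk ts k c = aa ts k \<or> Tk ts k c = bb ts k" using c by auto
  show p1: "Pm ts gs (K - {k}) r c = mat_id r c" by (rule Pm_out[OF out[OF c]])
  show p2: "Pm ts gs (K - {k}) r (Tk ts k c) = mat_id r (Tk ts k c)" by (rule Pm_out[OF out[OF tc]])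
  have g: "gs ! k \<in> L_sub n (aa ts k, bb ts k)" by (rule gs_k[OF gs kd])
  have ne: "Tk ts k c \<noteq> c" using c ab by auto
  show "(\<lambda>r. \<delta> r * Pm ts gs K r c) = (\<lambda>r. (gs ! k) c c * (\<delta> r * Pm ts gs (K - {k}) r c)
            + (gs ! k) (Tk ts k c) c * (\<delta> r * Pm ts gs (K - {k}) r (Tk ts k c)))"
  proof
    fix r
    have "Pm ts gs K r c = (gs ! k) r c" by (rule Pm_in[OF K c])
    moreover have "Pm ts gs (K - {k}) r c = mat_id r c" by (rule Pm_out[OF out[OF c]])
    moreover have "Pm ts gs (K - {k}) r (Tk ts k c) = mat_id r (Tk ts k c)" by (rule Pm_out[OF out[OF tc]])
    moreover have "r \<noteq> c \<Longrightarrow> r \<noteq> Tk ts k c \<Longrightarrow> (gs ! k) r c = 0"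
      using Lsub_zero[OF g, of c r] c by auto
    ultimately show "\<delta> r * Pm ts gs K r c = (gs ! k) c c * (\<delta> r * Pm ts gs (K - {k}) r c)
            + (gs ! k) (Tk ts k c) c * (\<delta> r * Pm ts gs (K - {k}) r (Tk ts k c))"
      using ne unfolding mat_id_def by (cases "r = c"; cases "r = Tk ts k c") auto
  qed
qed

lemma X_none:
  assumes gs: "gs_ok n ts gs" and K: "K \<subseteq> {0..<d}" "k \<in> K"
    and na: "aa ts k \<notin> w ` {1..t}" and nb: "bb ts k \<notin> w ` {1..t}"
  shows "Xw n t \<delta> ts gs K w = Xw n t \<delta> ts gs (K - {k}) w"
    and "Xw n t \<delta> ts gs (K - {k}) (Tk ts k \<circ> w) = Xw n t \<delta> ts gs (K - {k}) w"
proof -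
  have h: "w m \<noteq> aa ts k" "w m \<noteq> bb ts k" if "m \<in> {1..t}" for m using na nb that by (metis image_eqI)+
  show "Xw n t \<delta> ts gs K w = Xw n t \<delta> ts gs (K - {k}) w"
    unfolding Xw_def by (rule ext, rule wedge_cong) (use h Pm_remove in auto)
  show "Xw n t \<delta> ts gs (K - {k}) (Tk ts k \<circ> w) = Xw n t \<delta> ts gs (K - {k}) w"
    unfolding Xw_def by (rule ext, rule wedge_cong) (use h Tk_o in auto)
qed

lemma X_one:
  assumes gs: "gs_ok n ts gs" and K: "K \<subseteq> {0..<d}" "k \<in> K" and w: "w permutes {1..n}"
    and x: "x = aa ts k \<or> x = bb ts k" and xin: "x \<in> w ` {1..t}" and yout: "Tk ts k x \<notin> w ` {1..t}"
  shows "Xw n t \<delta> ts gs K w S = (gs ! k) x x * Xw n t \<delta> ts gs (K - {k}) w S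
          + (gs ! k) (Tk ts k x) x * Xw n t \<delta> ts gs (K - {k}) (Tk ts k \<circ> w) S"
proof -
  obtain m0 where m0: "m0 \<in> {1..t}" "w m0 = x" using xin by auto
  have inj: "inj w" using permutes_inj[OF w] .
  have oth: "w m \<noteq> aa ts k \<and> w m \<noteq> bb ts k" if "m \<in> {1..t}" "m \<noteq> m0" for m
  proof -
    have "w m \<noteq> x" using inj m0 that by (metis injD)
    moreover have "w m \<noteq> Tk ts k x" using yout that by (metis image_eqI)
    ultimately show ?thesis using x by auto
  qed
  let ?f = "\<lambda>m r. \<delta> r * Pm ts gs K r (w m)"
  let ?A = "\<lambda>r. \<delta> r * Pm ts gs (K - {k}) r x"
  let ?B = "\<lambda>r. \<delta> r * Pm ts gs (K - {k}) r (Tk ts k x)"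
  have fm0: "?f m0 = (\<lambda>r. (gs ! k) x x * ?A r + (gs ! k) (Tk ts k x) x * ?B r)"
    using col_block(1)[OF gs K x, of \<delta>] m0 by simp
  have "Xw n t \<delta> ts gs K w S = (gs ! k) x x * wedge n t (?f(m0 := ?A)) S
      + (gs ! k) (Tk ts k x) x * wedge n t (?f(m0 := ?B)) S"
    unfolding Xw_def by (rule wedge_lin[where f="?f" and A="?A" and B="?B"], rule m0(1), rule fm0)
  moreover have "wedge n t (?f(m0 := ?A)) = Xw n t \<delta> ts gs (K - {k}) w"
    unfolding Xw_def
  proof
    fix S show "wedge n t (?f(m0 := ?A)) S = wedge n t (\<lambda>m r. \<delta> r * Pm ts gs (K - {k}) r (w m)) S"
      by (rule wedge_cong) (use m0 oth Pm_remove in auto)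
  qed
  moreover have "wedge n t (?f(m0 := ?B)) = Xw n t \<delta> ts gs (K - {k}) (Tk ts k \<circ> w)"
    unfolding Xw_def
  proof
    fix S show "wedge n t (?f(m0 := ?B)) S = wedge n t (\<lambda>m r. \<delta> r * Pm ts gs (K - {k}) r ((Tk ts k \<circ> w) m)) S"
      by (rule wedge_cong) (use m0 oth Pm_remove Tk_o in auto)
  qed
  ultimately show ?thesis by simp
qed

lemma X_both:
  assumes gs: "gs_ok n ts gs" and K: "K \<subseteq> {0..<d}" "k \<in> K" and w: "w permutes {1..n}"
    and ain: "aa ts k \<in> w ` {1..t}" and bin: "bb ts k \<in> w ` {1..t}"
  shows "Xw n t \<delta> ts gs K w S = Xw n t \<delta> ts gs (K - {k}) w S"
    and "Xw n t \<delta> ts gs (K - {k}) (Tk ts k \<circ> w) S = - Xw n t \<delta> ts gs (K - {k}) w S"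
proof -
  let ?a = "aa ts k" and ?b = "bb ts k" and ?g = "gs ! k"
  have kd: "k < d" using K by auto
  have ab: "?a \<noteq> ?b" using ab_in[OF kd] by simp
  obtain m0 where m0: "m0 \<in> {1..t}" "w m0 = ?a" using ain by auto
  obtain m1 where m1: "m1 \<in> {1..t}" "w m1 = ?b" using bin by auto
  have m01: "m0 \<noteq> m1" using m0 m1 ab by auto
  have inj: "inj w" using permutes_inj[OF w] .
  have oth: "w m \<noteq> ?a \<and> w m \<noteq> ?b" if "m \<noteq> m0" "m \<noteq> m1" for m
    using inj m0 m1 that by (metis injD)
  let ?f = "\<lambda>m r. \<delta> r * Pm ts gs K r (w m)"
  let ?C0 = "\<lambda>r. \<delta> r * Pm ts gs (K - {k}) r ?a"
  let ?C1 = "\<lambda>r. \<delta> r * Pm ts gs (K - {k}) r ?b"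
  have fm0: "?f m0 = (\<lambda>r. ?g ?a ?a * ?C0 r + ?g ?b ?a * ?C1 r)"
    using col_block(1)[OF gs K, of ?a \<delta>] m0 by simp
  have fm1: "?f m1 = (\<lambda>r. ?g ?b ?b * ?C1 r + ?g ?a ?b * ?C0 r)"
    using col_block(1)[OF gs K, of ?b \<delta>] m1 by simp
  let ?F01 = "?f(m0 := ?C0, m1 := ?C1)"
  have sw: "?f(m0 := ?C1, m1 := ?C0) = ?F01 \<circ> transpose m0 m1"
    using m01 by (auto simp: fun_eq_iff transpose_def)
  have W1: "wedge n t ?f S = ?g ?a ?a * wedge n t (?f(m0 := ?C0)) S + ?g ?b ?a * wedge n t (?f(m0 := ?C1)) S"
    by (rule wedge_lin[where f="?f" and A="?C0" and B="?C1"], rule m0(1), rule fm0)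
  have W2: "wedge n t (?f(m0 := ?C0)) S = ?g ?b ?b * wedge n t ?F01 S + ?g ?a ?b * wedge n t (?f(m0 := ?C0, m1 := ?C0)) S"
    by (rule wedge_lin[where f="?f(m0 := ?C0)" and A="?C1" and B="?C0"], rule m1(1)) (use fm1 m01 in simp)
  have W3: "wedge n t (?f(m0 := ?C1)) S = ?g ?b ?b * wedge n t (?f(m0 := ?C1, m1 := ?C1)) S + ?g ?a ?b * wedge n t (?f(m0 := ?C1, m1 := ?C0)) S"
    by (rule wedge_lin[where f="?f(m0 := ?C1)" and A="?C1" and B="?C0"], rule m1(1)) (use fm1 m01 in simp)
  have Z1: "wedge n t (?f(m0 := ?C0, m1 := ?C0)) S = 0"
    by (rule wedge_eq0[OF m0(1) m1(1) m01]) (use m01 in simp)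
  have Z2: "wedge n t (?f(m0 := ?C1, m1 := ?C1)) S = 0"
    by (rule wedge_eq0[OF m0(1) m1(1) m01]) (use m01 in simp)
  have S1: "wedge n t (?f(m0 := ?C1, m1 := ?C0)) S = - wedge n t ?F01 S"
    unfolding sw by (rule wedge_swap[OF m0(1) m1(1) m01])
  have det: "?g ?a ?a * ?g ?b ?b - ?g ?a ?b * ?g ?b ?a = 1" using Lsub_det[OF gs_k[OF gs kd]] .
  have E1: "wedge n t ?F01 S = Xw n t \<delta> ts gs (K - {k}) w S"
    unfolding Xw_def by (rule wedge_cong) (use m0 m1 oth Pm_remove in auto)
  have E2: "Xw n t \<delta> ts gs (K - {k}) (Tk ts k \<circ> w) S = wedge n t (?f(m0 := ?C1, m1 := ?C0)) S"
    unfolding Xw_def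
  proof (rule wedge_cong)
    fix m r assume m: "m \<in> {1..t}" "r \<in> {1..n}"
    show "\<delta> r * Pm ts gs (K - {k}) r ((Tk ts k \<circ> w) m) = (?f(m0 := ?C1, m1 := ?C0)) m r"
    proof (cases "m = m0 \<or> m = m1")
      case True thus ?thesis using m0 m1 m01 by auto
    next
      case False
      hence o: "w m \<noteq> ?a" "w m \<noteq> ?b" using oth by auto
      thus ?thesis using False Tk_o[OF o] Pm_remove[OF o, of gs K r] by simp
    qed
  qed
  have "Xw n t \<delta> ts gs K w S = (?g ?a ?a * ?g ?b ?b - ?g ?a ?b * ?g ?b ?a) * wedge n t ?F01 S"
    unfolding Xw_def W1 W2 W3 Z1 Z2 S1 by (simp add: algebra_simps)
  thus "Xw n t \<delta> ts gs K w S = Xw n t \<delta> ts gs (K - {k}) w S" using det E1 by simp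
  show "Xw n t \<delta> ts gs (K - {k}) (Tk ts k \<circ> w) S = - Xw n t \<delta> ts gs (K - {k}) w S"
    using E2 S1 E1 by simp
qed

lemma X_delta:
  assumes gs: "gs_ok n ts gs" and K: "K \<subseteq> {0..<d}" and xK: "\<forall>l\<in>K. x \<noteq> aa ts l \<and> x \<noteq> bb ts l"
    and dd: "\<And>r. r \<noteq> x \<Longrightarrow> \<delta>' r = \<delta> r" and w: "w permutes {1..n}"
  shows "x \<notin> w ` {1..t} \<Longrightarrow> Xw n t \<delta>' ts gs K w S = Xw n t \<delta> ts gs K w S"
    and "m0 \<in> {1..t} \<Longrightarrow> w m0 = x \<Longrightarrow> \<delta> x * Xw n t \<delta>' ts gs K w S = \<delta>' x * Xw n t \<delta> ts gs K w S"
proof -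
  have colx: "\<delta>' r * Pm ts gs K r c = \<delta> r * Pm ts gs K r c" if "c \<noteq> x" for r c
  proof (cases "r = x")
    case True
    have "Pm ts gs K x c = 0"
    proof (cases "\<exists>l\<in>K. c = aa ts l \<or> c = bb ts l")
      case True
      then obtain l where l: "l \<in> K" "c = aa ts l \<or> c = bb ts l" by blast
      hence "Pm ts gs K x c = (gs ! l) x c" using Pm_in[OF K] by blast
      also have "\<dots> = 0" using Lsub_zero[OF gs_k[OF gs, of l]] l K xK by auto
      finally show ?thesis .
    next
      case False thus ?thesis using Pm_out[of K c] \<open>c \<noteq> x\<close> by (auto simp: mat_id_def)
    qed
    thus ?thesis using True by simp
  qed (simp add: dd)
  have inj: "inj w" using permutes_inj[OF w] .
  show "x \<notin> w ` {1..t} \<Longrightarrow> Xw n t \<delta>' ts gs K w S = Xw n t \<delta> ts gs K w S"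
    unfolding Xw_def by (rule wedge_cong) (metis colx image_eqI)
  assume m0: "m0 \<in> {1..t}" "w m0 = x"
  have oth: "w m \<noteq> x" if "m \<noteq> m0" for m using inj m0 that by (metis injD)
  let ?E = "\<lambda>r. mat_id r x"
  have px: "Pm ts gs K r x = mat_id r x" for r using Pm_out[of K x] xK by auto
  have c1: "(\<lambda>r. \<delta> r * Pm ts gs K r (w m0)) = (\<lambda>r. \<delta> x * ?E r + 0 * ?E r)"
    using m0 px by (auto simp: fun_eq_iff mat_id_def)
  have c2: "(\<lambda>r. \<delta>' r * Pm ts gs K r (w m0)) = (\<lambda>r. \<delta>' x * ?E r + 0 * ?E r)"
    using m0 px by (auto simp: fun_eq_iff mat_id_def)
  have L1: "Xw n t \<delta> ts gs K w S = \<delta> x * wedge n t ((\<lambda>m r. \<delta> r * Pm ts gs K r (w m))(m0 := ?E)) S"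
    unfolding Xw_def
    using wedge_lin[where f="\<lambda>m r. \<delta> r * Pm ts gs K r (w m)" and A="?E" and B="?E", OF m0(1) c1] by simp
  have L2: "Xw n t \<delta>' ts gs K w S = \<delta>' x * wedge n t ((\<lambda>m r. \<delta>' r * Pm ts gs K r (w m))(m0 := ?E)) S"
    unfolding Xw_def
    using wedge_lin[where f="\<lambda>m r. \<delta>' r * Pm ts gs K r (w m)" and A="?E" and B="?E", OF m0(1) c2] by simp
  have "wedge n t ((\<lambda>m r. \<delta> r * Pm ts gs K r (w m))(m0 := ?E)) S
      = wedge n t ((\<lambda>m r. \<delta>' r * Pm ts gs K r (w m))(m0 := ?E)) S"
  proof (rule wedge_cong)
    fix m r assume m: "m \<in> {1..t}" "r \<in> {1..n}"
    show "((\<lambda>m r. \<delta> r * Pm ts gs K r (w m))(m0 := ?E)) m r = ((\<lambda>m r. \<delta>' r * Pm ts gs K r (w m))(m0 := ?E)) m r"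
    proof (cases "m = m0")
      case False thus ?thesis using colx[OF oth[OF False], of r] by auto
    qed simp
  qed
  thus "\<delta> x * Xw n t \<delta>' ts gs K w S = \<delta>' x * Xw n t \<delta> ts gs K w S" using L1 L2 by simp
qed

end

definition dl :: "complex \<Rightarrow> nat \<Rightarrow> (nat \<Rightarrow> nat) \<Rightarrow> nat \<Rightarrow> complex" where
  "dl q i w r = (if r \<in> w ` {1..i} then 1 else q)"

definition Zf :: "nat \<Rightarrow> complex \<Rightarrow> nat \<Rightarrow> nat \<Rightarrow> (nat \<times> nat) list \<Rightarrow> (nat \<Rightarrow> nat \<Rightarrow> complex) list
    \<Rightarrow> nat set \<Rightarrow> nat set \<Rightarrow> (nat \<Rightarrow> nat) \<Rightarrow> nat set \<times> nat set \<Rightarrow> complex" where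
  "Zf n q i j ts gs E K w ST = (\<Sum>L\<in>Pow E. q ^ card L * (Xw n i (\<lambda>_. 1) ts gs K (s_prod ts (E - L) \<circ> w) (fst ST)
      * Xw n j (dl q i (s_prod ts L \<circ> w)) ts gs K (s_prod ts L \<circ> w) (snd ST)))"

lemma sum_Pow_insert:
  assumes "finite E" "k \<notin> E"
  shows "(\<Sum>L\<in>Pow (insert k E). f L) = (\<Sum>L\<in>Pow E. f L) + (\<Sum>L\<in>Pow E. f (insert k L))"
proof -
  have d: "Pow E \<inter> insert k ` Pow E = {}" using assms(2) by auto
  have inj: "inj_on (insert k) (Pow E)"
  proof (rule inj_onI)
    fix x y assume xy: "x \<in> Pow E" "y \<in> Pow E" "insert k x = insert k y"
    hence "k \<notin> x" "k \<notin> y" using assms(2) by auto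
    hence "x = insert k x - {k}" "y = insert k y - {k}" by auto
    thus "x = y" using xy(3) by simp
  qed
  show ?thesis unfolding Pow_insert
    using sum.union_disjoint[OF _ _ d, of f] sum.reindex[OF inj, of f] assms(1) by simp
qed

context blocks
begin

lemma fac_lemma:
  assumes gs: "gs_ok n ts gs" and K: "K \<subseteq> {0..<d}"
    and x0K: "\<forall>l\<in>K. x0 \<noteq> aa ts l \<and> x0 \<noteq> bb ts l" and y0K: "\<forall>l\<in>K. y0 \<noteq> aa ts l \<and> y0 \<noteq> bb ts l"
    and xy: "x0 \<noteq> y0" and dd: "\<And>r. r \<noteq> x0 \<Longrightarrow> r \<noteq> y0 \<Longrightarrow> \<delta>' r = \<delta> r" and w: "w permutes {1..n}"
  shows "Xw n t \<delta>' ts gs K w S * (if x0 \<in> w ` {1..t} then \<delta> x0 else 1) * (if y0 \<in> w ` {1..t} then \<delta> y0 else 1)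
       = Xw n t \<delta> ts gs K w S * (if x0 \<in> w ` {1..t} then \<delta>' x0 else 1) * (if y0 \<in> w ` {1..t} then \<delta>' y0 else 1)"
proof -
  let ?m = "\<delta>(x0 := \<delta>' x0)"
  have A: "Xw n t ?m ts gs K w S * (if x0 \<in> w ` {1..t} then \<delta> x0 else 1)
      = Xw n t \<delta> ts gs K w S * (if x0 \<in> w ` {1..t} then \<delta>' x0 else 1)"
  proof (cases "x0 \<in> w ` {1..t}")
    case True
    then obtain m0 where "m0 \<in> {1..t}" "w m0 = x0" by auto
    from X_delta(2)[OF gs K x0K _ w this, of ?m \<delta> S] show ?thesis using True by (simp add: mult.commute)
  next
    case False
    from X_delta(1)[OF gs K x0K _ w False, of ?m \<delta> S] show ?thesis using False by simp
  qed
  have B: "Xw n t \<delta>' ts gs K w S * (if y0 \<in> w ` {1..t} then ?m y0 else 1)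
      = Xw n t ?m ts gs K w S * (if y0 \<in> w ` {1..t} then \<delta>' y0 else 1)"
  proof (cases "y0 \<in> w ` {1..t}")
    case True
    then obtain m0 where "m0 \<in> {1..t}" "w m0 = y0" by auto
    from X_delta(2)[OF gs K y0K _ w this, of \<delta>' ?m S] show ?thesis using True dd by (simp add: mult.commute)
  next
    case False
    from X_delta(1)[OF gs K y0K _ w False, of \<delta>' ?m S] show ?thesis using False dd by simp
  qed
  have my: "?m y0 = \<delta> y0" using xy by simp
  show ?thesis
  proof -
    have "Xw n t \<delta>' ts gs K w S * (if x0 \<in> w ` {1..t} then \<delta> x0 else 1) * (if y0 \<in> w ` {1..t} then \<delta> y0 else 1)
      = (Xw n t \<delta>' ts gs K w S * (if y0 \<in> w ` {1..t} then ?m y0 else 1)) * (if x0 \<in> w ` {1..t} then \<delta> x0 else 1)"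
      using my by (simp add: algebra_simps)
    also have "\<dots> = (Xw n t ?m ts gs K w S * (if x0 \<in> w ` {1..t} then \<delta> x0 else 1)) * (if y0 \<in> w ` {1..t} then \<delta>' y0 else 1)"
      unfolding B by (simp add: algebra_simps)
    also have "\<dots> = Xw n t \<delta> ts gs K w S * (if x0 \<in> w ` {1..t} then \<delta>' x0 else 1) * (if y0 \<in> w ` {1..t} then \<delta>' y0 else 1)"
      unfolding A ..
    finally show ?thesis .
  qed
qed

lemma Tk_img: "v \<in> (Tk ts k \<circ> y) ` A \<longleftrightarrow> Tk ts k v \<in> y ` A"
  unfolding Tk_def image_comp[symmetric] by (rule in_transpose_image_iff)

lemma Tk_Tk[simp]: "Tk ts k (Tk ts k v) = v" unfolding Tk_def by simp

lemma Tk_perm: "k < d \<Longrightarrow> Tk ts k permutes {1..n}"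
  unfolding Tk_def using ab_in[of k] by (simp add: permutes_swap_id)

lemma dl_same:
  assumes "aa ts k \<in> y ` {1..i} \<longleftrightarrow> bb ts k \<in> y ` {1..i}"
  shows "dl q i (Tk ts k \<circ> y) = dl q i y"
proof -
  have "(Tk ts k \<circ> y) ` {1..i} = y ` {1..i}"
    unfolding image_comp[symmetric] Tk_def using assms by (rule transpose_image_eq)
  thus ?thesis unfolding dl_def by simp
qed

lemma dl_switch:
  assumes gs: "gs_ok n ts gs" and K: "K \<subseteq> {0..<d}" "k < d" "k \<notin> K" and y: "y permutes {1..n}"
    and x0: "x0 = aa ts k \<or> x0 = bb ts k" and xin: "x0 \<in> y ` {1..i}" and yout: "Tk ts k x0 \<notin> y ` {1..i}"
  shows "Xw n t (dl q i y) ts gs K (Tk ts k \<circ> y) S * (if Tk ts k x0 \<in> y ` {1..t} then q else 1)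
       = Xw n t (dl q i (Tk ts k \<circ> y)) ts gs K (Tk ts k \<circ> y) S * (if x0 \<in> y ` {1..t} then q else 1)"
proof -
  let ?z = "Tk ts k \<circ> y" and ?y0 = "Tk ts k x0"
  have z: "?z permutes {1..n}" using permutes_compose[OF y Tk_perm[OF K(2)]] .
  have outK: "\<forall>l\<in>K. v \<noteq> aa ts l \<and> v \<noteq> bb ts l" if "v = aa ts k \<or> v = bb ts k" for v
    using disj[of k] K that by fastforce
  have y0ab: "?y0 = aa ts k \<or> ?y0 = bb ts k" using x0 by auto
  have xy: "x0 \<noteq> ?y0" using x0 ab_in[OF K(2)] by auto
  have dd: "dl q i y r = dl q i ?z r" if "r \<noteq> x0" "r \<noteq> ?y0" for r
  proof -
    have "Tk ts k r = r" using that x0 by (intro Tk_o) auto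
    thus ?thesis unfolding dl_def using Tk_img[of r k y "{1..i}"] by simp
  qed
  have "Xw n t (dl q i y) ts gs K ?z S * (if x0 \<in> ?z ` {1..t} then dl q i ?z x0 else 1) * (if ?y0 \<in> ?z ` {1..t} then dl q i ?z ?y0 else 1)
       = Xw n t (dl q i ?z) ts gs K ?z S * (if x0 \<in> ?z ` {1..t} then dl q i y x0 else 1) * (if ?y0 \<in> ?z ` {1..t} then dl q i y ?y0 else 1)"
    by (rule fac_lemma[OF gs K(1) outK[OF x0] outK[OF y0ab] xy dd z])
  moreover have "dl q i ?z x0 = q" using yout Tk_img[of x0 k y "{1..i}"] unfolding dl_def by simp
  moreover have "dl q i ?z ?y0 = 1" using xin Tk_img[of ?y0 k y "{1..i}"] unfolding dl_def by simp
  moreover have "dl q i y x0 = 1" using xin unfolding dl_def by simp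
  moreover have "dl q i y ?y0 = q" using yout unfolding dl_def by simp
  moreover have "x0 \<in> ?z ` {1..t} \<longleftrightarrow> ?y0 \<in> y ` {1..t}" using Tk_img[of x0 k y] by simp
  moreover have "?y0 \<in> ?z ` {1..t} \<longleftrightarrow> x0 \<in> y ` {1..t}" using Tk_img[of ?y0 k y] by simp
  ultimately show ?thesis by (cases "x0 \<in> y ` {1..t}"; cases "?y0 \<in> y ` {1..t}") (simp_all add: mult.commute)
qed

lemma mem_transfer:
  assumes "A \<subseteq> {0..<d}" "k < d" "k \<notin> A" "x = aa ts k \<or> x = bb ts k"
  shows "x \<in> (s_prod ts A \<circ> w) ` B \<longleftrightarrow> x \<in> w ` B"
proof -
  have "\<forall>l\<in>A. x \<noteq> aa ts l \<and> x \<noteq> bb ts l" using disj[of k] assms by fastforce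
  thus ?thesis unfolding image_comp[symmetric] using sp_mem[OF assms(1)] by blast
qed

lemma sp_single: "k < d \<Longrightarrow> s_prod ts {k} = Tk ts k"
  using sp_insert[of "{}" k] by (simp add: sp_empty)

lemma sp_Tk_comm:
  assumes "A \<subseteq> {0..<d}" "k < d" "k \<notin> A"
  shows "s_prod ts A \<circ> Tk ts k = Tk ts k \<circ> s_prod ts A"
proof -
  have "s_prod ts (A \<union> {k}) = s_prod ts A \<circ> s_prod ts {k}" using assms by (intro sp_union) auto
  moreover have "s_prod ts ({k} \<union> A) = s_prod ts {k} \<circ> s_prod ts A" using assms by (intro sp_union) auto
  ultimately show ?thesis using sp_single[OF assms(2)] by (metis Un_commute)
qed

lemma ins_rem: "k \<notin> K' \<Longrightarrow> insert k K' - {k} = K'" by auto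

lemma UV_both:
  assumes gs: "gs_ok n ts gs" and K: "K' \<subseteq> {0..<d}" "k < d" "k \<notin> K'" and v: "v permutes {1..n}"
    and x0: "x0 = aa ts k \<or> x0 = bb ts k" and c: "x0 \<in> v ` {1..i}" "Tk ts k x0 \<notin> v ` {1..i}"
     "x0 \<in> v ` {1..j}" "Tk ts k x0 \<notin> v ` {1..j}"
  shows "Xw n i (\<lambda>_. 1) ts gs (insert k K') v S = (gs ! k) x0 x0 * Xw n i (\<lambda>_. 1) ts gs K' v S
            + (gs ! k) (Tk ts k x0) x0 * Xw n i (\<lambda>_. 1) ts gs K' (Tk ts k \<circ> v) S"
    and "Xw n j (dl q i v) ts gs (insert k K') v T = (gs ! k) x0 x0 * Xw n j (dl q i v) ts gs K' v T
            + q * (gs ! k) (Tk ts k x0) x0 * Xw n j (dl q i (Tk ts k \<circ> v)) ts gs K' (Tk ts k \<circ> v) T"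
proof -
  have K2: "insert k K' \<subseteq> {0..<d}" "k \<in> insert k K'" using K by auto
  show "Xw n i (\<lambda>_. 1) ts gs (insert k K') v S = (gs ! k) x0 x0 * Xw n i (\<lambda>_. 1) ts gs K' v S
            + (gs ! k) (Tk ts k x0) x0 * Xw n i (\<lambda>_. 1) ts gs K' (Tk ts k \<circ> v) S"
    using X_one[OF gs K2 v x0 c(1,2)] ins_rem[OF K(3)] by simp
  have "Xw n j (dl q i v) ts gs (insert k K') v T = (gs ! k) x0 x0 * Xw n j (dl q i v) ts gs K' v T
            + (gs ! k) (Tk ts k x0) x0 * Xw n j (dl q i v) ts gs K' (Tk ts k \<circ> v) T"
    using X_one[OF gs K2 v x0 c(3,4)] ins_rem[OF K(3)] by simp
  moreover have "Xw n j (dl q i v) ts gs K' (Tk ts k \<circ> v) T = q * Xw n j (dl q i (Tk ts k \<circ> v)) ts gs K' (Tk ts k \<circ> v) T"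
    using dl_switch[OF gs K v x0 c(1,2), where t=j and S=T and q=q] c(3,4) by (simp add: mult.commute)
  ultimately show "Xw n j (dl q i v) ts gs (insert k K') v T = (gs ! k) x0 x0 * Xw n j (dl q i v) ts gs K' v T
            + q * (gs ! k) (Tk ts k x0) x0 * Xw n j (dl q i (Tk ts k \<circ> v)) ts gs K' (Tk ts k \<circ> v) T"
    by simp
qed

lemma X_sign:
  assumes gs: "gs_ok n ts gs" and K: "K' \<subseteq> {0..<d}" "k < d" "k \<notin> K'" and v: "v permutes {1..n}"
    and c: "aa ts k \<in> v ` {1..t} \<longleftrightarrow> bb ts k \<in> v ` {1..t}"
  shows "Xw n t \<delta> ts gs (insert k K') v S = Xw n t \<delta> ts gs K' v S"
    and "Xw n t \<delta> ts gs K' (Tk ts k \<circ> v) S = (if aa ts k \<in> v ` {1..t} then -1 else 1) * Xw n t \<delta> ts gs K' v S"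
proof -
  have K2: "insert k K' \<subseteq> {0..<d}" "k \<in> insert k K'" using K by auto
  show "Xw n t \<delta> ts gs (insert k K') v S = Xw n t \<delta> ts gs K' v S"
  proof (cases "aa ts k \<in> v ` {1..t}")
    case True thus ?thesis using X_both(1)[OF gs K2 v, of t \<delta> S] c ins_rem[OF K(3)] by simp
  next
    case False thus ?thesis using X_none(1)[OF gs K2, of v t \<delta>] c ins_rem[OF K(3)] by simp
  qed
  show "Xw n t \<delta> ts gs K' (Tk ts k \<circ> v) S = (if aa ts k \<in> v ` {1..t} then -1 else 1) * Xw n t \<delta> ts gs K' v S"
  proof (cases "aa ts k \<in> v ` {1..t}")
    case True thus ?thesis using X_both(2)[OF gs K2 v, of t \<delta> S] c ins_rem[OF K(3)] by simp
  next
    case False thus ?thesis using X_none(2)[OF gs K2, of v t \<delta>] c ins_rem[OF K(3)] by simp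
  qed
qed

lemma Zf_both:
  assumes gs: "gs_ok n ts gs" and K: "K' \<subseteq> {0..<d}" "k < d" "k \<notin> K'" and E: "E \<subseteq> {0..<d}" "k \<notin> E"
    and w: "w permutes {1..n}"
    and x0: "x0 = aa ts k \<or> x0 = bb ts k" and c: "x0 \<in> w ` {1..i}" "Tk ts k x0 \<notin> w ` {1..i}"
     "x0 \<in> w ` {1..j}" "Tk ts k x0 \<notin> w ` {1..j}"
  shows "Zf n q i j ts gs E (insert k K') w ST = ((gs ! k) x0 x0)\<^sup>2 * Zf n q i j ts gs E K' w ST
     + (gs ! k) x0 x0 * (gs ! k) (Tk ts k x0) x0 * Zf n q i j ts gs (insert k E) K' w ST
     + q * ((gs ! k) (Tk ts k x0) x0)\<^sup>2 * Zf n q i j ts gs E K' (Tk ts k \<circ> w) ST"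
proof -
  obtain S T where ST: "ST = (S, T)" by (cases ST)
  let ?a = "(gs ! k) x0 x0" and ?c = "(gs ! k) (Tk ts k x0) x0"
  define U where "U K v = Xw n i (\<lambda>_. 1) ts gs K v S" for K v
  define V where "V K v = Xw n j (dl q i v) ts gs K v T" for K v
  have finE: "finite E" using E(1) finite_subset by blast
  have y0: "Tk ts k x0 = aa ts k \<or> Tk ts k x0 = bb ts k" using x0 by auto
  have key: "q ^ card L * (U (insert k K') (s_prod ts (E - L) \<circ> w) * V (insert k K') (s_prod ts L \<circ> w))
     = ?a\<^sup>2 * (q ^ card L * (U K' (s_prod ts (E - L) \<circ> w) * V K' (s_prod ts L \<circ> w)))
     + ?a * ?c * ((q ^ card L * (U K' (s_prod ts (insert k E - L) \<circ> w) * V K' (s_prod ts L \<circ> w)))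
         + (q ^ card (insert k L) * (U K' (s_prod ts (insert k E - insert k L) \<circ> w) * V K' (s_prod ts (insert k L) \<circ> w))))
     + q * ?c\<^sup>2 * (q ^ card L * (U K' (s_prod ts (E - L) \<circ> (Tk ts k \<circ> w)) * V K' (s_prod ts L \<circ> (Tk ts k \<circ> w))))"
    if L: "L \<in> Pow E" for L
  proof -
    have LE: "L \<subseteq> {0..<d}" "k \<notin> L" "E - L \<subseteq> {0..<d}" "k \<notin> E - L" using L E by auto
    have finL: "finite L" using L finE finite_subset by auto
    have px: "s_prod ts (E - L) \<circ> w permutes {1..n}" using permutes_compose[OF w sp_perm[OF LE(3)]] .
    have py: "s_prod ts L \<circ> w permutes {1..n}" using permutes_compose[OF w sp_perm[OF LE(1)]] .
    have tx: "v \<in> (s_prod ts (E - L) \<circ> w) ` B \<longleftrightarrow> v \<in> w ` B" if "v = aa ts k \<or> v = bb ts k" for v B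
      using mem_transfer[OF LE(3) K(2) LE(4) that] .
    have ty: "v \<in> (s_prod ts L \<circ> w) ` B \<longleftrightarrow> v \<in> w ` B" if "v = aa ts k \<or> v = bb ts k" for v B
      using mem_transfer[OF LE(1) K(2) LE(2) that] .
    have hU: "U (insert k K') (s_prod ts (E - L) \<circ> w) = ?a * U K' (s_prod ts (E - L) \<circ> w)
        + ?c * U K' (Tk ts k \<circ> (s_prod ts (E - L) \<circ> w))"
      unfolding U_def by (rule UV_both(1)[OF gs K px x0]) (use c tx[OF x0] tx[OF y0] in auto)
    have hV: "V (insert k K') (s_prod ts L \<circ> w) = ?a * V K' (s_prod ts L \<circ> w)
        + q * ?c * V K' (Tk ts k \<circ> (s_prod ts L \<circ> w))"
      unfolding V_def by (rule UV_both(2)[OF gs K py x0]) (use c ty[OF x0] ty[OF y0] in auto)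
    have cx: "Tk ts k \<circ> (s_prod ts (E - L) \<circ> w) = s_prod ts (E - L) \<circ> (Tk ts k \<circ> w)"
      using sp_Tk_comm[OF LE(3) K(2) LE(4)] by (simp add: o_assoc)
    have cy: "Tk ts k \<circ> (s_prod ts L \<circ> w) = s_prod ts L \<circ> (Tk ts k \<circ> w)"
      using sp_Tk_comm[OF LE(1) K(2) LE(2)] by (simp add: o_assoc)
    have ex: "s_prod ts (insert k E - L) \<circ> w = Tk ts k \<circ> (s_prod ts (E - L) \<circ> w)"
    proof -
      have "insert k E - L = insert k (E - L)" using LE by auto
      thus ?thesis using sp_insert[OF LE(3) K(2) LE(4)] by (simp add: o_assoc)
    qed
    have e2: "insert k E - insert k L = E - L" using E(2) by auto
    have ey: "s_prod ts (insert k L) \<circ> w = Tk ts k \<circ> (s_prod ts L \<circ> w)"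
      using sp_insert[OF LE(1) K(2) LE(2)] by (simp add: o_assoc)
    have cd: "card (insert k L) = Suc (card L)" using finL LE(2) by simp
    show ?thesis unfolding hU hV ex e2 ey cd cx cy by (simp add: algebra_simps power2_eq_square)
  qed
  have "Zf n q i j ts gs E (insert k K') w ST = (\<Sum>L\<in>Pow E. q ^ card L * (U (insert k K') (s_prod ts (E - L) \<circ> w) * V (insert k K') (s_prod ts L \<circ> w)))"
    unfolding Zf_def ST U_def V_def by simp
  also have "\<dots> = ?a\<^sup>2 * (\<Sum>L\<in>Pow E. q ^ card L * (U K' (s_prod ts (E - L) \<circ> w) * V K' (s_prod ts L \<circ> w)))
     + ?a * ?c * ((\<Sum>L\<in>Pow E. q ^ card L * (U K' (s_prod ts (insert k E - L) \<circ> w) * V K' (s_prod ts L \<circ> w)))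
         + (\<Sum>L\<in>Pow E. q ^ card (insert k L) * (U K' (s_prod ts (insert k E - insert k L) \<circ> w) * V K' (s_prod ts (insert k L) \<circ> w))))
     + q * ?c\<^sup>2 * (\<Sum>L\<in>Pow E. q ^ card L * (U K' (s_prod ts (E - L) \<circ> (Tk ts k \<circ> w)) * V K' (s_prod ts L \<circ> (Tk ts k \<circ> w))))"
    apply (subst sum.cong[OF refl key], assumption)
    by (simp only: sum.distrib sum_distrib_left[symmetric])
  also have "(\<Sum>L\<in>Pow E. q ^ card L * (U K' (s_prod ts (insert k E - L) \<circ> w) * V K' (s_prod ts L \<circ> w)))
         + (\<Sum>L\<in>Pow E. q ^ card (insert k L) * (U K' (s_prod ts (insert k E - insert k L) \<circ> w) * V K' (s_prod ts (insert k L) \<circ> w)))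
      = Zf n q i j ts gs (insert k E) K' w ST"
    unfolding Zf_def ST U_def V_def fst_conv snd_conv by (simp only: sum_Pow_insert[OF finE E(2)])
  finally show ?thesis unfolding Zf_def ST U_def V_def by simp
qed

lemma L_facts:
  assumes E: "E \<subseteq> {0..<d}" "k < d" "k \<notin> E" and L: "L \<subseteq> E" and w: "w permutes {1..n}"
  shows "s_prod ts (E - L) \<circ> w permutes {1..n}" "s_prod ts L \<circ> w permutes {1..n}"
    "\<And>v B. v = aa ts k \<or> v = bb ts k \<Longrightarrow> v \<in> (s_prod ts (E - L) \<circ> w) ` B \<longleftrightarrow> v \<in> w ` B"
    "\<And>v B. v = aa ts k \<or> v = bb ts k \<Longrightarrow> v \<in> (s_prod ts L \<circ> w) ` B \<longleftrightarrow> v \<in> w ` B"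
    "Tk ts k \<circ> (s_prod ts (E - L) \<circ> w) = s_prod ts (E - L) \<circ> (Tk ts k \<circ> w)"
    "Tk ts k \<circ> (s_prod ts L \<circ> w) = s_prod ts L \<circ> (Tk ts k \<circ> w)"
proof -
  have LE: "L \<subseteq> {0..<d}" "k \<notin> L" "E - L \<subseteq> {0..<d}" "k \<notin> E - L" using L E by auto
  show "s_prod ts (E - L) \<circ> w permutes {1..n}" using permutes_compose[OF w sp_perm[OF LE(3)]] .
  show "s_prod ts L \<circ> w permutes {1..n}" using permutes_compose[OF w sp_perm[OF LE(1)]] .
  show "v \<in> (s_prod ts (E - L) \<circ> w) ` B \<longleftrightarrow> v \<in> w ` B" if "v = aa ts k \<or> v = bb ts k" for v B
    using mem_transfer[OF LE(3) E(2) LE(4) that] .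
  show "v \<in> (s_prod ts L \<circ> w) ` B \<longleftrightarrow> v \<in> w ` B" if "v = aa ts k \<or> v = bb ts k" for v B
    using mem_transfer[OF LE(1) E(2) LE(2) that] .
  show "Tk ts k \<circ> (s_prod ts (E - L) \<circ> w) = s_prod ts (E - L) \<circ> (Tk ts k \<circ> w)"
    using sp_Tk_comm[OF LE(3) E(2) LE(4)] by (simp add: o_assoc)
  show "Tk ts k \<circ> (s_prod ts L \<circ> w) = s_prod ts L \<circ> (Tk ts k \<circ> w)"
    using sp_Tk_comm[OF LE(1) E(2) LE(2)] by (simp add: o_assoc)
qed

lemma Zf_other:
  assumes gs: "gs_ok n ts gs" and K: "K' \<subseteq> {0..<d}" "k < d" "k \<notin> K'" and E: "E \<subseteq> {0..<d}" "k \<notin> E"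
    and w: "w permutes {1..n}" and q: "q \<noteq> 0"
    and nb: "\<not> ((aa ts k \<in> w ` {1..i} \<longleftrightarrow> bb ts k \<notin> w ` {1..i}) \<and> (aa ts k \<in> w ` {1..j} \<longleftrightarrow> bb ts k \<notin> w ` {1..j}))"
  shows "\<exists>c1 c2. \<forall>ST. Zf n q i j ts gs E (insert k K') w ST = c1 * Zf n q i j ts gs E K' w ST
            + c2 * Zf n q i j ts gs E K' (Tk ts k \<circ> w) ST"
proof -
  define U where "U K v S = Xw n i (\<lambda>_. 1) ts gs K v S" for K v S
  define V where "V K v T = Xw n j (dl q i v) ts gs K v T" for K v T
  have generic: "\<forall>ST. Zf n q i j ts gs E (insert k K') w ST = c1 * Zf n q i j ts gs E K' w ST
            + c2 * Zf n q i j ts gs E K' (Tk ts k \<circ> w) ST"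
    if h: "\<And>L S T. L \<subseteq> E \<Longrightarrow> U (insert k K') (s_prod ts (E - L) \<circ> w) S * V (insert k K') (s_prod ts L \<circ> w) T
        = c1 * (U K' (s_prod ts (E - L) \<circ> w) S * V K' (s_prod ts L \<circ> w) T)
        + c2 * (U K' (s_prod ts (E - L) \<circ> (Tk ts k \<circ> w)) S * V K' (s_prod ts L \<circ> (Tk ts k \<circ> w)) T)" for c1 c2
  proof
    fix ST :: "nat set \<times> nat set"
    obtain S T where ST: "ST = (S, T)" by (cases ST)
    have "Zf n q i j ts gs E (insert k K') w ST = (\<Sum>L\<in>Pow E. c1 * (q ^ card L * (U K' (s_prod ts (E - L) \<circ> w) S * V K' (s_prod ts L \<circ> w) T))
        + c2 * (q ^ card L * (U K' (s_prod ts (E - L) \<circ> (Tk ts k \<circ> w)) S * V K' (s_prod ts L \<circ> (Tk ts k \<circ> w)) T)))"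
      unfolding Zf_def ST fst_conv snd_conv U_def[symmetric] V_def[symmetric]
    proof (rule sum.cong[OF refl])
      fix L assume "L \<in> Pow E"
      hence hL: "U (insert k K') (s_prod ts (E - L) \<circ> w) S * V (insert k K') (s_prod ts L \<circ> w) T
        = c1 * (U K' (s_prod ts (E - L) \<circ> w) S * V K' (s_prod ts L \<circ> w) T)
        + c2 * (U K' (s_prod ts (E - L) \<circ> (Tk ts k \<circ> w)) S * V K' (s_prod ts L \<circ> (Tk ts k \<circ> w)) T)"
        by (intro h) auto
      show "q ^ card L * (U (insert k K') (s_prod ts (E - L) \<circ> w) S * V (insert k K') (s_prod ts L \<circ> w) T)
        = c1 * (q ^ card L * (U K' (s_prod ts (E - L) \<circ> w) S * V K' (s_prod ts L \<circ> w) T))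
        + c2 * (q ^ card L * (U K' (s_prod ts (E - L) \<circ> (Tk ts k \<circ> w)) S * V K' (s_prod ts L \<circ> (Tk ts k \<circ> w)) T))"
        unfolding hL by (simp add: algebra_simps)
    qed
    thus "Zf n q i j ts gs E (insert k K') w ST = c1 * Zf n q i j ts gs E K' w ST
            + c2 * Zf n q i j ts gs E K' (Tk ts k \<circ> w) ST"
      unfolding Zf_def ST fst_conv snd_conv U_def[symmetric] V_def[symmetric]
      by (simp only: sum.distrib sum_distrib_left[symmetric])
  qed
  have ab: "aa ts k \<noteq> bb ts k" using ab_in[OF K(2)] by simp
  have K2: "insert k K' \<subseteq> {0..<d}" "k \<in> insert k K'" using K by auto
  have ab_or: "aa ts k = aa ts k \<or> aa ts k = bb ts k" "bb ts k = aa ts k \<or> bb ts k = bb ts k" by auto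
  consider (ionly) "aa ts k \<in> w ` {1..i} \<longleftrightarrow> bb ts k \<notin> w ` {1..i}" "aa ts k \<in> w ` {1..j} \<longleftrightarrow> bb ts k \<in> w ` {1..j}"
    | (jonly) "aa ts k \<in> w ` {1..i} \<longleftrightarrow> bb ts k \<in> w ` {1..i}" "aa ts k \<in> w ` {1..j} \<longleftrightarrow> bb ts k \<notin> w ` {1..j}"
    | (none) "aa ts k \<in> w ` {1..i} \<longleftrightarrow> bb ts k \<in> w ` {1..i}" "aa ts k \<in> w ` {1..j} \<longleftrightarrow> bb ts k \<in> w ` {1..j}"
    using nb by blast
  thus ?thesis
  proof cases
    case ionly
    obtain x0 where x0: "x0 = aa ts k \<or> x0 = bb ts k" "x0 \<in> w ` {1..i}" "Tk ts k x0 \<notin> w ` {1..i}"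
      using ionly(1) ab by (metis Tk_a Tk_b)
    let ?e = "if aa ts k \<in> w ` {1..j} then -1 else (1::complex)"
    show ?thesis
    proof (intro exI generic)
      fix L S T assume L: "L \<subseteq> E"
      note F = L_facts[OF E(1) K(2) E(2) L w]
      have y0: "Tk ts k x0 = aa ts k \<or> Tk ts k x0 = bb ts k" using x0 by auto
      have hU: "U (insert k K') (s_prod ts (E - L) \<circ> w) S = (gs ! k) x0 x0 * U K' (s_prod ts (E - L) \<circ> w) S
          + (gs ! k) (Tk ts k x0) x0 * U K' (s_prod ts (E - L) \<circ> (Tk ts k \<circ> w)) S"
        unfolding U_def F(5)[symmetric]
        using X_one[OF gs K2 F(1) x0(1), of i] x0 F(3)[OF x0(1)] F(3)[OF y0] ins_rem[OF K(3)] by simp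
      have cj: "aa ts k \<in> (s_prod ts L \<circ> w) ` {1..j} \<longleftrightarrow> bb ts k \<in> (s_prod ts L \<circ> w) ` {1..j}"
        using ionly(2) F(4)[OF ab_or(1)] F(4)[OF ab_or(2)] by simp
      have hV: "V (insert k K') (s_prod ts L \<circ> w) T = V K' (s_prod ts L \<circ> w) T"
        unfolding V_def by (rule X_sign(1)[OF gs K F(2) cj])
      have s1: "Xw n j (dl q i (s_prod ts L \<circ> w)) ts gs K' (Tk ts k \<circ> (s_prod ts L \<circ> w)) T = ?e * V K' (s_prod ts L \<circ> w) T"
        unfolding V_def using X_sign(2)[OF gs K F(2) cj] F(4)[OF ab_or(1)] by simp
      have s2: "Xw n j (dl q i (s_prod ts L \<circ> w)) ts gs K' (Tk ts k \<circ> (s_prod ts L \<circ> w)) T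
          = V K' (Tk ts k \<circ> (s_prod ts L \<circ> w)) T"
      proof -
        have eq: "(Tk ts k x0 \<in> (s_prod ts L \<circ> w) ` {1..j}) = (x0 \<in> (s_prod ts L \<circ> w) ` {1..j})"
          using cj x0(1) by (metis Tk_a Tk_b)
        have xi: "x0 \<in> (s_prod ts L \<circ> w) ` {1..i}" using x0 F(4)[OF x0(1)] by auto
        have yi: "Tk ts k x0 \<notin> (s_prod ts L \<circ> w) ` {1..i}" using x0 F(4)[OF y0] by auto
        let ?f = "if x0 \<in> (s_prod ts L \<circ> w) ` {1..j} then q else 1"
        have D: "Xw n j (dl q i (s_prod ts L \<circ> w)) ts gs K' (Tk ts k \<circ> (s_prod ts L \<circ> w)) T * ?f
          = Xw n j (dl q i (Tk ts k \<circ> (s_prod ts L \<circ> w))) ts gs K' (Tk ts k \<circ> (s_prod ts L \<circ> w)) T * ?f"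
          using dl_switch[OF gs K F(2) x0(1) xi yi, where t=j and S=T and q=q] unfolding eq .
        have "?f \<noteq> 0" using q by simp
        with D show ?thesis unfolding V_def by simp
      qed
      have ee: "?e * ?e = 1" by simp
      have hV2: "V K' (s_prod ts L \<circ> w) T = ?e * V K' (s_prod ts L \<circ> (Tk ts k \<circ> w)) T"
        using s1 s2 F(6) ee by (metis mult.assoc mult_1)
      show "U (insert k K') (s_prod ts (E - L) \<circ> w) S * V (insert k K') (s_prod ts L \<circ> w) T
        = (gs ! k) x0 x0 * (U K' (s_prod ts (E - L) \<circ> w) S * V K' (s_prod ts L \<circ> w) T)
        + (gs ! k) (Tk ts k x0) x0 * ?e * (U K' (s_prod ts (E - L) \<circ> (Tk ts k \<circ> w)) S * V K' (s_prod ts L \<circ> (Tk ts k \<circ> w)) T)"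
        unfolding hU hV using hV2 by (simp add: algebra_simps)
    qed
  next
    case jonly
    obtain x0 where x0: "x0 = aa ts k \<or> x0 = bb ts k" "x0 \<in> w ` {1..j}" "Tk ts k x0 \<notin> w ` {1..j}"
      using jonly(2) ab by (metis Tk_a Tk_b)
    let ?e = "if aa ts k \<in> w ` {1..i} then -1 else (1::complex)"
    show ?thesis
    proof (intro exI generic)
      fix L S T assume L: "L \<subseteq> E"
      note F = L_facts[OF E(1) K(2) E(2) L w]
      have y0: "Tk ts k x0 = aa ts k \<or> Tk ts k x0 = bb ts k" using x0 by auto
      have ci: "aa ts k \<in> (s_prod ts (E - L) \<circ> w) ` {1..i} \<longleftrightarrow> bb ts k \<in> (s_prod ts (E - L) \<circ> w) ` {1..i}"
        using jonly(1) F(3)[OF ab_or(1)] F(3)[OF ab_or(2)] by simp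
      have hU: "U (insert k K') (s_prod ts (E - L) \<circ> w) S = U K' (s_prod ts (E - L) \<circ> w) S"
        unfolding U_def by (rule X_sign(1)[OF gs K F(1) ci])
      have hU2: "U K' (s_prod ts (E - L) \<circ> w) S = ?e * U K' (s_prod ts (E - L) \<circ> (Tk ts k \<circ> w)) S"
      proof -
        have "U K' (s_prod ts (E - L) \<circ> (Tk ts k \<circ> w)) S = ?e * U K' (s_prod ts (E - L) \<circ> w) S"
          unfolding U_def F(5)[symmetric] using X_sign(2)[OF gs K F(1) ci] F(3)[OF ab_or(1)] by simp
        thus ?thesis by (auto split: if_splits)
      qed
      have ciL: "aa ts k \<in> (s_prod ts L \<circ> w) ` {1..i} \<longleftrightarrow> bb ts k \<in> (s_prod ts L \<circ> w) ` {1..i}"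
        using jonly(1) F(4)[OF ab_or(1)] F(4)[OF ab_or(2)] by simp
      have hV: "V (insert k K') (s_prod ts L \<circ> w) T = (gs ! k) x0 x0 * V K' (s_prod ts L \<circ> w) T
          + (gs ! k) (Tk ts k x0) x0 * V K' (s_prod ts L \<circ> (Tk ts k \<circ> w)) T"
        unfolding V_def F(6)[symmetric] dl_same[OF ciL]
        using X_one[OF gs K2 F(2) x0(1), of j] x0 F(4)[OF x0(1)] F(4)[OF y0] ins_rem[OF K(3)] by simp
      show "U (insert k K') (s_prod ts (E - L) \<circ> w) S * V (insert k K') (s_prod ts L \<circ> w) T
        = (gs ! k) x0 x0 * (U K' (s_prod ts (E - L) \<circ> w) S * V K' (s_prod ts L \<circ> w) T)
        + (gs ! k) (Tk ts k x0) x0 * ?e * (U K' (s_prod ts (E - L) \<circ> (Tk ts k \<circ> w)) S * V K' (s_prod ts L \<circ> (Tk ts k \<circ> w)) T)"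
        unfolding hU hV using hU2 by (simp add: algebra_simps)
    qed
  next
    case none
    show ?thesis
    proof (intro exI generic)
      fix L S T assume L: "L \<subseteq> E"
      note F = L_facts[OF E(1) K(2) E(2) L w]
      have ci: "aa ts k \<in> (s_prod ts (E - L) \<circ> w) ` {1..i} \<longleftrightarrow> bb ts k \<in> (s_prod ts (E - L) \<circ> w) ` {1..i}"
        using none(1) F(3)[OF ab_or(1)] F(3)[OF ab_or(2)] by simp
      have cj: "aa ts k \<in> (s_prod ts L \<circ> w) ` {1..j} \<longleftrightarrow> bb ts k \<in> (s_prod ts L \<circ> w) ` {1..j}"
        using none(2) F(4)[OF ab_or(1)] F(4)[OF ab_or(2)] by simp
      have hU: "U (insert k K') (s_prod ts (E - L) \<circ> w) S = U K' (s_prod ts (E - L) \<circ> w) S"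
        unfolding U_def by (rule X_sign(1)[OF gs K F(1) ci])
      have hV: "V (insert k K') (s_prod ts L \<circ> w) T = V K' (s_prod ts L \<circ> w) T"
        unfolding V_def by (rule X_sign(1)[OF gs K F(2) cj])
      show "U (insert k K') (s_prod ts (E - L) \<circ> w) S * V (insert k K') (s_prod ts L \<circ> w) T
        = 1 * (U K' (s_prod ts (E - L) \<circ> w) S * V K' (s_prod ts L \<circ> w) T)
        + 0 * (U K' (s_prod ts (E - L) \<circ> (Tk ts k \<circ> w)) S * V K' (s_prod ts L \<circ> (Tk ts k \<circ> w)) T)"
        unfolding hU hV by simp
    qed
  qed
qed

end

lemma sum_app: "(\<Sum>a\<in>A. f a) x = (\<Sum>a\<in>A. f a x)"
  by (induction A rule: infinite_finite_induct) simp_all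

lemma fmod: "module (\<lambda>c (f :: 'a \<Rightarrow> complex) x. c * f x)"
  by unfold_locales (auto simp: fun_eq_iff algebra_simps)

lemma cs_base: "x \<in> A \<Longrightarrow> x \<in> cspan A"
  unfolding cspan_def by (rule module.span_base[OF fmod])

lemma cs_lin2: "f \<in> cspan A \<Longrightarrow> g \<in> cspan A \<Longrightarrow> (\<lambda>z. c1 * f z + c2 * g z) \<in> cspan A"
proof -
  assume f: "f \<in> cspan A" and g: "g \<in> cspan A"
  have "(\<lambda>z. c1 * f z) \<in> cspan A" "(\<lambda>z. c2 * g z) \<in> cspan A"
    using f g unfolding cspan_def by (auto intro: module.span_scale[OF fmod])
  hence "(\<lambda>z. c1 * f z) + (\<lambda>z. c2 * g z) \<in> cspan A"
    unfolding cspan_def by (rule module.span_add[OF fmod])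
  thus ?thesis by (simp add: plus_fun_def)
qed

lemma cs_scale: "f \<in> cspan A \<Longrightarrow> (\<lambda>z. c * f z) \<in> cspan A"
  unfolding cspan_def by (rule module.span_scale[OF fmod])

lemma cs_lin3: "f \<in> cspan A \<Longrightarrow> g \<in> cspan A \<Longrightarrow> h \<in> cspan A \<Longrightarrow> (\<lambda>z. c1 * f z + c2 * g z + c3 * h z) \<in> cspan A"
  using cs_lin2[of "\<lambda>z. c1 * f z + c2 * g z" A h 1 c3] cs_lin2[of f A g c1 c2] by simp

lemma cs_minimal: "A \<subseteq> cspan B \<Longrightarrow> cspan A \<subseteq> cspan B"
  unfolding cspan_def using module.span_minimal[OF fmod] module.subspace_span[OF fmod] by blast

lemma prod_q: "(\<Prod>m\<in>{1..j}. if m \<le> i then 1 else q) = (q::complex) ^ (j - i)"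
proof (induction j)
  case (Suc j)
  have "{1..Suc j} = insert (Suc j) {1..j}" by auto
  hence "(\<Prod>m\<in>{1..Suc j}. if m \<le> i then 1 else q) = (if Suc j \<le> i then 1 else q) * (\<Prod>m\<in>{1..j}. if m \<le> i then 1 else q)"
    by simp
  also have "\<dots> = q ^ (Suc j - i)" using Suc by (cases "Suc j \<le> i") (auto simp: Suc_diff_le)
  finally show ?case .
qed simp

definition subl :: "(nat \<times> nat) list \<Rightarrow> nat set \<Rightarrow> (nat \<times> nat) list" where
  "subl ts E = map (\<lambda>k. ts ! k) (sorted_list_of_set E)"

definition effw :: "(nat \<times> nat) list \<Rightarrow> nat \<Rightarrow> (nat \<Rightarrow> nat) \<Rightarrow> nat \<Rightarrow> bool" where
  "effw ts k w t \<longleftrightarrow> (aa ts k \<in> w ` {1..t} \<longleftrightarrow> bb ts k \<notin> w ` {1..t})"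

lemma transp_ne: "a \<noteq> b \<Longrightarrow> (a \<in> A \<longleftrightarrow> b \<notin> A) \<Longrightarrow> transpose a b ` A \<noteq> A"
proof
  assume ab: "a \<noteq> b" and e: "a \<in> A \<longleftrightarrow> b \<notin> A" and t: "transpose a b ` A = A"
  show False
  proof (cases "a \<in> A")
    case True
    hence "transpose a b a \<in> transpose a b ` A" by blast
    thus False using t e True by simp
  next
    case False
    hence "b \<in> A" using e by blast
    hence "transpose a b b \<in> transpose a b ` A" by blast
    thus False using t False by simp
  qed
qed

context blocks
begin

lemma Pm_empty: "Pm ts gs {} r c = mat_id r c" unfolding Pm_def by simp

lemma U_empty: "Xw n t (\<lambda>_. 1) ts gs {} x = e_w n t x"
  unfolding Xw_def e_w_def std_basis_def Pm_empty mat_id_def by simp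

lemma V_empty:
  assumes y: "y permutes {1..n}" and j: "j \<le> n"
  shows "Xw n j (dl q i y) ts gs {} y = (\<lambda>T. q ^ (j - i) * e_w n j y T)"
proof
  fix T
  have inj: "inj y" using permutes_inj[OF y] .
  have "Xw n j (dl q i y) ts gs {} y T = wedge n j (\<lambda>m r. dl q i y (y m) * std_basis (y m) r) T"
    unfolding Xw_def std_basis_def Pm_empty mat_id_def
    by (rule wedge_cong) simp
  also have "\<dots> = (\<Prod>m\<in>{1..j}. dl q i y (y m)) * e_w n j y T"
    unfolding e_w_def by (rule wedge_scale)
  also have "(\<Prod>m\<in>{1..j}. dl q i y (y m)) = (\<Prod>m\<in>{1..j}. if m \<le> i then 1 else q)"
  proof (rule prod.cong[OF refl])
    fix m assume m: "m \<in> {1..j}"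
    have "y m \<in> y ` {1..i} \<longleftrightarrow> m \<in> {1..i}" by (rule inj_image_mem_iff[OF inj])
    thus "dl q i y (y m) = (if m \<le> i then 1 else q)" unfolding dl_def using m by auto
  qed
  finally show "Xw n j (dl q i y) ts gs {} y T = q ^ (j - i) * e_w n j y T" unfolding prod_q .
qed

lemma ks_facts:
  assumes "E \<subseteq> {0..<d}"
  shows "distinct (sorted_list_of_set E)" "set (sorted_list_of_set E) = E" "length (sorted_list_of_set E) = card E"
    "bij_betw ((!) (sorted_list_of_set E)) {0..<card E} E"
proof -
  have fin: "finite E" using assms finite_subset by blast
  show "distinct (sorted_list_of_set E)" "set (sorted_list_of_set E) = E" "length (sorted_list_of_set E) = card E"
    using fin by auto
  thus "bij_betw ((!) (sorted_list_of_set E)) {0..<card E} E"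
    by (intro bij_betw_nth) auto
qed

lemma subl_len: "E \<subseteq> {0..<d} \<Longrightarrow> length (subl ts E) = card E"
  unfolding subl_def using ks_facts(3) by simp

lemma subl_nth: "E \<subseteq> {0..<d} \<Longrightarrow> l < card E \<Longrightarrow> subl ts E ! l = ts ! (sorted_list_of_set E ! l)"
  unfolding subl_def using ks_facts(3) by simp

lemma ks_in: "E \<subseteq> {0..<d} \<Longrightarrow> l < card E \<Longrightarrow> sorted_list_of_set E ! l \<in> E"
proof -
  assume E: "E \<subseteq> {0..<d}" and l: "l < card E"
  have "sorted_list_of_set E ! l \<in> set (sorted_list_of_set E)" using l ks_facts(3)[OF E] by (intro nth_mem) simp
  thus ?thesis using ks_facts(2)[OF E] by simp
qed

lemma blocks_subl: assumes E: "E \<subseteq> {0..<d}" shows "blocks_ok n (subl ts E)"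
proof -
  have inj: "inj_on ((!) (sorted_list_of_set E)) {0..<card E}" using ks_facts(4)[OF E] bij_betw_def by blast
  show ?thesis unfolding blocks_ok_def subl_len[OF E]
  proof (rule conjI; intro allI impI)
    fix k assume k: "k < card E"
    have kk: "sorted_list_of_set E ! k < d" using ks_in[OF E k] E by auto
    show "fst (subl ts E ! k) \<in> {1..n} \<and> snd (subl ts E ! k) \<in> {1..n} \<and> fst (subl ts E ! k) \<noteq> snd (subl ts E ! k)"
      unfolding subl_nth[OF E k] using ab_in[OF kk] unfolding aa_def bb_def by simp
  next
    fix k l assume kl: "k < card E" "l < card E" "k \<noteq> l"
    have kk: "sorted_list_of_set E ! k < d" using ks_in[OF E kl(1)] E by auto
    have ll: "sorted_list_of_set E ! l < d" using ks_in[OF E kl(2)] E by auto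
    have ne: "sorted_list_of_set E ! k \<noteq> sorted_list_of_set E ! l" using inj_on_contraD[OF inj kl(3)] kl by simp
    show "{fst (subl ts E ! k), snd (subl ts E ! k)} \<inter> {fst (subl ts E ! l), snd (subl ts E ! l)} = {}"
      unfolding subl_nth[OF E kl(1)] subl_nth[OF E kl(2)] using disj[OF kk ll ne] unfolding aa_def bb_def by auto
  qed
qed

lemma sp_subl:
  assumes E: "E \<subseteq> {0..<d}"
  shows "L' \<subseteq> {0..<card E} \<Longrightarrow> s_prod (subl ts E) L' = s_prod ts ((!) (sorted_list_of_set E) ` L')"
proof (induction L' rule: infinite_finite_induct)
  case (infinite L') thus ?case using finite_subset by blast
next
  case empty thus ?case using sp_empty blocks.sp_empty[OF blocks.intro[OF blocks_subl[OF E]]] by simp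
next
  case (insert l L')
  interpret S: blocks n "subl ts E" by (rule blocks.intro[OF blocks_subl[OF E]])
  let ?ks = "sorted_list_of_set E"
  have inj: "inj_on ((!) ?ks) {0..<card E}" using bij_betw_imp_inj_on[OF ks_facts(4)[OF E]] .
  have l: "l < card E" using insert by auto
  have Ll: "L' \<subseteq> {0..<card E}" using insert by auto
  have "s_prod (subl ts E) (insert l L') = Tk (subl ts E) l \<circ> s_prod (subl ts E) L'"
    using S.sp_insert[of L' l] Ll l insert(2) subl_len[OF E] by simp
  also have "Tk (subl ts E) l = Tk ts (?ks ! l)" unfolding Tk_def aa_def bb_def subl_nth[OF E l] ..
  also have "s_prod (subl ts E) L' = s_prod ts ((!) ?ks ` L')" using insert Ll by simp
  also have "Tk ts (?ks ! l) \<circ> s_prod ts ((!) ?ks ` L') = s_prod ts (insert (?ks ! l) ((!) ?ks ` L'))"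
  proof (rule sp_insert[symmetric])
    show "(!) ?ks ` L' \<subseteq> {0..<d}" using ks_in[OF E] Ll E by fastforce
    show "?ks ! l < d" using ks_in[OF E l] E by auto
    show "?ks ! l \<notin> (!) ?ks ` L'" using inj l Ll insert(2) by (auto dest: inj_onD)
  qed
  finally show ?case by simp
qed

lemma e_C_subl:
  assumes E: "E \<subseteq> {0..<d}"
  shows "e_C n q i j (subl ts E) w x = (\<Sum>L\<in>Pow E. q ^ card L * (e_w n i (s_prod ts (E - L) \<circ> w) (fst x) * e_w n j (s_prod ts L \<circ> w) (snd x)))"
proof -
  let ?ks = "sorted_list_of_set E"
  let ?h = "image ((!) ?ks)"
  have bij: "bij_betw ?h (Pow {0..<card E}) (Pow E)" by (rule bij_betw_image_Pow[OF ks_facts(4)[OF E]])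
  have inj: "inj_on ((!) ?ks) {0..<card E}" using bij_betw_imp_inj_on[OF ks_facts(4)[OF E]] .
  have img: "(!) ?ks ` {0..<card E} = E" using bij_betw_imp_surj_on[OF ks_facts(4)[OF E]] .
  have "e_C n q i j (subl ts E) w x = (\<Sum>L\<in>Pow {0..<card E}. q ^ card L * (e_w n i (s_prod (subl ts E) ({0..<card E} - L) \<circ> w) (fst x) * e_w n j (s_prod (subl ts E) L \<circ> w) (snd x)))"
    by (simp only: e_C_def sum_app tensor_def subl_len[OF E] case_prod_beta)
  also have "\<dots> = (\<Sum>L\<in>Pow {0..<card E}. q ^ card (?h L) * (e_w n i (s_prod ts (E - ?h L) \<circ> w) (fst x) * e_w n j (s_prod ts (?h L) \<circ> w) (snd x)))"
  proof (rule sum.cong[OF refl])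
    fix L assume L: "L \<in> Pow {0..<card E}"
    have "L \<subseteq> {0..<card E}" using L by simp
    hence c: "card (?h L) = card L" using card_image[OF inj_on_subset[OF inj]] by blast
    have d1: "?h ({0..<card E} - L) = E - ?h L"
      using inj_on_image_set_diff[OF inj, of "{0..<card E}" L] L img by auto
    show "q ^ card L * (e_w n i (s_prod (subl ts E) ({0..<card E} - L) \<circ> w) (fst x) * e_w n j (s_prod (subl ts E) L \<circ> w) (snd x))
       = q ^ card (?h L) * (e_w n i (s_prod ts (E - ?h L) \<circ> w) (fst x) * e_w n j (s_prod ts (?h L) \<circ> w) (snd x))"
    proof -
      have s1: "s_prod (subl ts E) L = s_prod ts (?h L)" by (rule sp_subl[OF E]) (use L in auto)
      have s2: "s_prod (subl ts E) ({0..<card E} - L) = s_prod ts (?h ({0..<card E} - L))" by (rule sp_subl[OF E]) auto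
      show ?thesis unfolding s1 s2 d1 c ..
    qed
  qed
  also have "\<dots> = (\<Sum>L\<in>Pow E. q ^ card L * (e_w n i (s_prod ts (E - L) \<circ> w) (fst x) * e_w n j (s_prod ts L \<circ> w) (snd x)))"
    by (rule sum.reindex_bij_betw[OF bij])
  finally show ?thesis .
qed

lemma Zf_empty:
  assumes E: "E \<subseteq> {0..<d}" and w: "w permutes {1..n}" and j: "j \<le> n"
  shows "Zf n q i j ts gs E {} w = (\<lambda>ST. q ^ (j - i) * e_C n q i j (subl ts E) w ST)"
proof
  fix ST
  have "Zf n q i j ts gs E {} w ST = (\<Sum>L\<in>Pow E. q ^ (j - i) * (q ^ card L * (e_w n i (s_prod ts (E - L) \<circ> w) (fst ST) * e_w n j (s_prod ts L \<circ> w) (snd ST))))"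
    unfolding Zf_def
  proof (rule sum.cong[OF refl])
    fix L assume L: "L \<in> Pow E"
    have py: "s_prod ts L \<circ> w permutes {1..n}" using permutes_compose[OF w sp_perm] L E by auto
    show "q ^ card L * (Xw n i (\<lambda>_. 1) ts gs {} (s_prod ts (E - L) \<circ> w) (fst ST) *
          Xw n j (dl q i (s_prod ts L \<circ> w)) ts gs {} (s_prod ts L \<circ> w) (snd ST)) =
         q ^ (j - i) * (q ^ card L * (e_w n i (s_prod ts (E - L) \<circ> w) (fst ST) * e_w n j (s_prod ts L \<circ> w) (snd ST)))"
      unfolding U_empty V_empty[OF py j] by (simp add: algebra_simps)
  qed
  also have "\<dots> = q ^ (j - i) * e_C n q i j (subl ts E) w ST"
    unfolding e_C_subl[OF E] by (simp add: sum_distrib_left)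
  finally show "Zf n q i j ts gs E {} w ST = q ^ (j - i) * e_C n q i j (subl ts E) w ST" .
qed

lemma mono_sub:
  assumes mono: "monogressive n ts w0" and E: "E \<subseteq> {0..<d}" and M: "M \<subseteq> {0..<d}" and EM: "E \<inter> M = {}"
  shows "monogressive n (subl ts E) (s_prod ts M \<circ> w0)"
proof -
  have w0: "w0 permutes {1..n}" using mono unfolding monogressive_def is_orthocell_def by (elim conjE)
  have lenA: "\<forall>L \<subseteq> {0..<d}. perm_length n (s_prod ts L \<circ> w0) = perm_length n w0 + card L"
    using mono unfolding monogressive_def by (elim conjE)
  have len: "perm_length n (s_prod ts L \<circ> w0) = perm_length n w0 + card L" if "L \<subseteq> {0..<d}" for L
    using lenA that by blast
  have finM: "finite M" using M finite_subset by blast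
  let ?ks = "sorted_list_of_set E"
  let ?h = "image ((!) ?ks)"
  have inj: "inj_on ((!) ?ks) {0..<card E}" using bij_betw_imp_inj_on[OF ks_facts(4)[OF E]] .
  have img: "(!) ?ks ` {0..<card E} = E" using bij_betw_imp_surj_on[OF ks_facts(4)[OF E]] .
  show ?thesis unfolding monogressive_def orth_iff
  proof (intro conjI allI impI)
    show "s_prod ts M \<circ> w0 permutes {1..n}" using permutes_compose[OF w0 sp_perm[OF M]] .
    show "blocks_ok n (subl ts E)" by (rule blocks_subl[OF E])
    fix L assume L: "L \<subseteq> {0..<length (subl ts E)}"
    hence L': "L \<subseteq> {0..<card E}" using subl_len[OF E] by simp
    have hL: "?h L \<subseteq> E" using image_mono[OF L', of "(!) ?ks"] unfolding img .
    have finE: "finite E" using finite_subset[OF E] by simp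
    have finh: "finite (?h L)" using finite_subset[OF hL finE] .
    have c: "card (?h L) = card L" using card_image[OF inj_on_subset[OF inj L']] .
    have "s_prod (subl ts E) L \<circ> (s_prod ts M \<circ> w0) = s_prod ts (?h L \<union> M) \<circ> w0"
    proof -
      have A: "s_prod (subl ts E) L = s_prod ts (?h L)" by (rule sp_subl[OF E L'])
      have B: "s_prod ts (?h L \<union> M) = s_prod ts (?h L) \<circ> s_prod ts M"
        using hL E M EM by (intro sp_union) auto
      show ?thesis by (simp only: A B o_assoc)
    qed
    moreover have "?h L \<union> M \<subseteq> {0..<d}" using hL E M by blast
    ultimately have "perm_length n (s_prod (subl ts E) L \<circ> (s_prod ts M \<circ> w0)) = perm_length n w0 + card (?h L \<union> M)"
      using len by simp
    also have "card (?h L \<union> M) = card L + card M"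
    proof -
      have "?h L \<inter> M = {}" using hL EM by blast
      thus ?thesis using card_Un_disjoint[OF finh finM] c by simp
    qed
    also have "perm_length n w0 + (card L + card M) = perm_length n (s_prod ts M \<circ> w0) + card L"
      using len[OF M] by simp
    finally show "perm_length n (s_prod (subl ts E) L \<circ> (s_prod ts M \<circ> w0)) = perm_length n (s_prod ts M \<circ> w0) + card L" .
  qed
qed

lemma eff_sub:
  assumes mono: "monogressive n ts w0" and E: "E \<subseteq> {0..<d}" and M: "M \<subseteq> {0..<d}" and EM: "E \<inter> M = {}"
    and eff: "\<forall>k\<in>E. effw ts k (s_prod ts M \<circ> w0) i \<and> effw ts k (s_prod ts M \<circ> w0) j"
  shows "ij_effective n i j (subl ts E) (s_prod ts M \<circ> w0)"
  unfolding ij_effective_def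
proof (intro conjI mono_sub[OF mono E M EM] allI impI ballI)
  fix k m assume k: "k < length (subl ts E)" and m: "m \<in> {i, j}"
  have k': "k < card E" using k subl_len[OF E] by simp
  have kd: "sorted_list_of_set E ! k < d" using ks_in[OF E k'] E by auto
  have e: "effw ts (sorted_list_of_set E ! k) (s_prod ts M \<circ> w0) m" using eff ks_in[OF E k'] m by auto
  show "transpose (fst (subl ts E ! k)) (snd (subl ts E ! k)) ` ((s_prod ts M \<circ> w0) ` {1..m}) \<noteq> (s_prod ts M \<circ> w0) ` {1..m}"
  proof -
    have "transpose (aa ts (sorted_list_of_set E ! k)) (bb ts (sorted_list_of_set E ! k)) ` ((s_prod ts M \<circ> w0) ` {1..m}) \<noteq> (s_prod ts M \<circ> w0) ` {1..m}"
      by (rule transp_ne) (use ab_in[OF kd] e in \<open>simp_all add: effw_def\<close>)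
    thus ?thesis unfolding subl_nth[OF E k'] aa_def bb_def .
  qed
qed

end

context blocks
begin

lemma effw_transfer:
  assumes "k < d" "l < d" "l \<noteq> k"
  shows "effw ts l (Tk ts k \<circ> w) t \<longleftrightarrow> effw ts l w t"
proof -
  have A: "{k} \<subseteq> {0..<d}" "l \<notin> {k}" using assms by auto
  have "aa ts l \<in> (s_prod ts {k} \<circ> w) ` {1..t} \<longleftrightarrow> aa ts l \<in> w ` {1..t}"
    by (rule mem_transfer[OF A(1) assms(2) A(2)]) simp
  moreover have "bb ts l \<in> (s_prod ts {k} \<circ> w) ` {1..t} \<longleftrightarrow> bb ts l \<in> w ` {1..t}"
    by (rule mem_transfer[OF A(1) assms(2) A(2)]) simp
  ultimately show ?thesis unfolding effw_def sp_single[OF assms(1)] by simp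
qed

lemma incl:
  assumes mono: "monogressive n ts w0" and gs: "gs_ok n ts gs" and q: "q \<noteq> 0" and j: "j \<le> n"
  shows "K \<subseteq> {0..<d} \<Longrightarrow> \<forall>E M. E \<subseteq> {0..<d} \<longrightarrow> M \<subseteq> {0..<d} \<longrightarrow> E \<inter> K = {} \<longrightarrow> M \<inter> (E \<union> K) = {}
     \<longrightarrow> (\<forall>k\<in>E. effw ts k (s_prod ts M \<circ> w0) i \<and> effw ts k (s_prod ts M \<circ> w0) j)
     \<longrightarrow> Zf n q i j ts gs E K (s_prod ts M \<circ> w0) \<in> cspan {e_C n q i j ts' w | ts' w. ij_effective n i j ts' w}"
proof (induction K rule: infinite_finite_induct)
  case (infinite K) thus ?case using finite_subset by blast
next
  case empty
  show ?case
  proof (intro allI impI)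
    fix E M assume E: "E \<subseteq> {0..<d}" and M: "M \<subseteq> {0..<d}" and "E \<inter> {} = {}" and EM: "M \<inter> (E \<union> {}) = {}"
      and eff: "\<forall>k\<in>E. effw ts k (s_prod ts M \<circ> w0) i \<and> effw ts k (s_prod ts M \<circ> w0) j"
    have w0: "w0 permutes {1..n}" using mono unfolding monogressive_def is_orthocell_def by (elim conjE)
    have w: "s_prod ts M \<circ> w0 permutes {1..n}" using permutes_compose[OF w0 sp_perm[OF M]] .
    have EM': "E \<inter> M = {}" using EM by blast
    have "e_C n q i j (subl ts E) (s_prod ts M \<circ> w0) \<in> {e_C n q i j ts' w | ts' w. ij_effective n i j ts' w}"
      using eff_sub[OF mono E M EM' eff] by blast
    hence "(\<lambda>ST. q ^ (j - i) * e_C n q i j (subl ts E) (s_prod ts M \<circ> w0) ST) \<in> cspan {e_C n q i j ts' w | ts' w. ij_effective n i j ts' w}"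
      by (intro cs_scale cs_base)
    thus "Zf n q i j ts gs E {} (s_prod ts M \<circ> w0) \<in> cspan {e_C n q i j ts' w | ts' w. ij_effective n i j ts' w}"
      unfolding Zf_empty[OF E w j] .
  qed
next
  case (insert k K')
  show ?case
  proof (intro allI impI)
    fix E M assume E: "E \<subseteq> {0..<d}" and M: "M \<subseteq> {0..<d}" and EK: "E \<inter> insert k K' = {}"
      and MEK: "M \<inter> (E \<union> insert k K') = {}"
      and eff: "\<forall>k\<in>E. effw ts k (s_prod ts M \<circ> w0) i \<and> effw ts k (s_prod ts M \<circ> w0) j"
    let ?T = "cspan {e_C n q i j ts' w | ts' w. ij_effective n i j ts' w}"
    let ?w = "s_prod ts M \<circ> w0"
    have kd: "k < d" and K': "K' \<subseteq> {0..<d}" using insert.prems by auto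
    have kE: "k \<notin> E" and kM: "k \<notin> M" using EK MEK by auto
    have IH: "\<And>E M. E \<subseteq> {0..<d} \<Longrightarrow> M \<subseteq> {0..<d} \<Longrightarrow> E \<inter> K' = {} \<Longrightarrow> M \<inter> (E \<union> K') = {}
       \<Longrightarrow> (\<forall>k\<in>E. effw ts k (s_prod ts M \<circ> w0) i \<and> effw ts k (s_prod ts M \<circ> w0) j)
       \<Longrightarrow> Zf n q i j ts gs E K' (s_prod ts M \<circ> w0) \<in> ?T"
      using insert.IH[OF K'] by blast
    have w0: "w0 permutes {1..n}" using mono unfolding monogressive_def is_orthocell_def by (elim conjE)
    have w: "?w permutes {1..n}" using permutes_compose[OF w0 sp_perm[OF M]] .
    have TkM: "Tk ts k \<circ> ?w = s_prod ts (insert k M) \<circ> w0"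
      using sp_insert[OF M kd kM] by (simp add: o_assoc)
    have A1: "Zf n q i j ts gs E K' ?w \<in> ?T"
      by (rule IH[OF E M]) (use EK MEK eff in auto)
    have A3: "Zf n q i j ts gs E K' (Tk ts k \<circ> ?w) \<in> ?T"
    proof -
      have "\<forall>l\<in>E. effw ts l (s_prod ts (insert k M) \<circ> w0) i \<and> effw ts l (s_prod ts (insert k M) \<circ> w0) j"
      proof
        fix l assume l: "l \<in> E"
        hence "l < d" "l \<noteq> k" using E kE by auto
        thus "effw ts l (s_prod ts (insert k M) \<circ> w0) i \<and> effw ts l (s_prod ts (insert k M) \<circ> w0) j"
          unfolding TkM[symmetric] using effw_transfer[OF kd] eff l by simp
      qed
      hence "Zf n q i j ts gs E K' (s_prod ts (insert k M) \<circ> w0) \<in> ?T"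
        by (intro IH E) (use M kd EK MEK insert.hyps(2) in auto)
      thus ?thesis unfolding TkM .
    qed
    show "Zf n q i j ts gs E (insert k K') ?w \<in> ?T"
    proof (cases "effw ts k ?w i \<and> effw ts k ?w j")
      case True
      define x0 where "x0 = (if aa ts k \<in> ?w ` {1..i} then aa ts k else bb ts k)"
      have x0: "x0 = aa ts k \<or> x0 = bb ts k" unfolding x0_def by simp
      have ci: "x0 \<in> ?w ` {1..i}" "Tk ts k x0 \<notin> ?w ` {1..i}"
        using True unfolding x0_def effw_def by auto
      have cj: "x0 \<in> ?w ` {1..j}" "Tk ts k x0 \<notin> ?w ` {1..j}"
      proof -
        have ej: "x0 \<in> ?w ` {1..j} \<longleftrightarrow> Tk ts k x0 \<notin> ?w ` {1..j}"
          using True x0 unfolding effw_def by (metis Tk_a Tk_b)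
        show "x0 \<in> ?w ` {1..j}"
        proof (cases "i \<le> j")
          case True thus ?thesis using ci(1) by auto
        next
          case False
          hence "?w ` {1..j} \<subseteq> ?w ` {1..i}" by (intro image_mono) auto
          thus ?thesis using ej ci(2) by blast
        qed
        thus "Tk ts k x0 \<notin> ?w ` {1..j}" using ej by blast
      qed
      have A2: "Zf n q i j ts gs (insert k E) K' ?w \<in> ?T"
        by (rule IH) (use E M kd EK MEK eff True insert.hyps(2) in auto)
      have eq: "Zf n q i j ts gs E (insert k K') ?w = (\<lambda>ST. ((gs ! k) x0 x0)\<^sup>2 * Zf n q i j ts gs E K' ?w ST
        + (gs ! k) x0 x0 * (gs ! k) (Tk ts k x0) x0 * Zf n q i j ts gs (insert k E) K' ?w ST
        + q * ((gs ! k) (Tk ts k x0) x0)\<^sup>2 * Zf n q i j ts gs E K' (Tk ts k \<circ> ?w) ST)"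
        using Zf_both[OF gs K' kd insert.hyps(2) E kE w x0 ci cj] by (simp add: fun_eq_iff)
      show ?thesis unfolding eq by (rule cs_lin3[OF A1 A2 A3])
    next
      case False
      hence nb: "\<not> ((aa ts k \<in> ?w ` {1..i} \<longleftrightarrow> bb ts k \<notin> ?w ` {1..i}) \<and> (aa ts k \<in> ?w ` {1..j} \<longleftrightarrow> bb ts k \<notin> ?w ` {1..j}))"
        unfolding effw_def .
      obtain c1 c2 where cc: "\<forall>ST. Zf n q i j ts gs E (insert k K') ?w ST = c1 * Zf n q i j ts gs E K' ?w ST
            + c2 * Zf n q i j ts gs E K' (Tk ts k \<circ> ?w) ST"
        using Zf_other[OF gs K' kd insert.hyps(2) E kE w q nb] by blast
      have eq: "Zf n q i j ts gs E (insert k K') ?w = (\<lambda>ST. c1 * Zf n q i j ts gs E K' ?w ST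
            + c2 * Zf n q i j ts gs E K' (Tk ts k \<circ> ?w) ST)"
        using cc by (simp add: fun_eq_iff)
      show ?thesis unfolding eq by (rule cs_lin2[OF A1 A3])
    qed
  qed
qed

end

lemma blocks_tail:
  assumes "blocks_ok n (t # ts)"
  shows "blocks_ok n ts"
  unfolding blocks_ok_def
proof (rule conjI; intro allI impI)
  fix k assume k: "k < length ts"
  have "Suc k < length (t # ts)" using k by simp
  thus "fst (ts ! k) \<in> {1..n} \<and> snd (ts ! k) \<in> {1..n} \<and> fst (ts ! k) \<noteq> snd (ts ! k)"
    using assms unfolding blocks_ok_def by (metis nth_Cons_Suc)
next
  fix k l assume kl: "k < length ts" "l < length ts" "k \<noteq> l"
  have "Suc k < length (t # ts)" "Suc l < length (t # ts)" "Suc k \<noteq> Suc l" using kl by auto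
  thus "{fst (ts ! k), snd (ts ! k)} \<inter> {fst (ts ! l), snd (ts ! l)} = {}"
    using assms unfolding blocks_ok_def by (metis nth_Cons_Suc)
qed

lemma gs_tail: "gs_ok n (t # ts) (g # gs) \<Longrightarrow> gs_ok n ts gs"
  unfolding gs_ok_def by (metis Suc_less_eq length_Cons nth_Cons_Suc old.nat.inject)

lemma gs_head: "gs_ok n (t # ts) (g # gs) \<Longrightarrow> g \<in> L_sub n (fst t, snd t)"
  unfolding gs_ok_def by (metis length_Cons nth_Cons_0 prod.collapse zero_less_Suc)

lemma sum_delta_r: "c \<in> A \<Longrightarrow> finite A \<Longrightarrow> (\<Sum>l\<in>A. f l * mat_id l c) = f c"
  unfolding mat_id_def by (simp add: sum.delta' if_distrib cong: if_cong)

lemma sum_delta_l: "finite A \<Longrightarrow> (\<Sum>l\<in>A. mat_id r l * f l) = (if r \<in> A then f r else 0)"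
proof -
  assume A: "finite A"
  have "(\<Sum>l\<in>A. mat_id r l * f l) = (\<Sum>l\<in>A. if r = l then f l else 0)"
    unfolding mat_id_def by (rule sum.cong) auto
  also have "\<dots> = (if r \<in> A then f r else 0)" using sum.delta[OF A, of r f] by (simp add: eq_commute)
  finally show ?thesis .
qed

lemma foldr_Pm:
  "blocks_ok n ts \<Longrightarrow> gs_ok n ts gs \<Longrightarrow> c \<in> {1..n} \<Longrightarrow> foldr (mat_mult n) gs mat_id r c = Pm ts gs {0..<length ts} r c"
proof (induction gs arbitrary: ts c r)
  case Nil
  hence "ts = []" unfolding gs_ok_def by simp
  thus ?case unfolding Pm_def by simp
next
  case (Cons g gs)
  obtain t ts' where ts: "ts = t # ts'" using Cons.prems(2) unfolding gs_ok_def by (cases ts) auto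
  have bt: "blocks_ok n ts'" using blocks_tail Cons.prems(1) ts by blast
  have gt: "gs_ok n ts' gs" using gs_tail Cons.prems(2) ts by blast
  have g: "g \<in> L_sub n (fst t, snd t)" using gs_head Cons.prems(2) ts by blast
  interpret B: blocks n ts by (rule blocks.intro[OF Cons.prems(1)])
  interpret B': blocks n ts' by (rule blocks.intro[OF bt])
  have a0: "aa ts 0 = fst t" "bb ts 0 = snd t" unfolding aa_def bb_def ts by simp_all
  have aS: "aa ts (Suc k) = aa ts' k" "bb ts (Suc k) = bb ts' k" for k unfolding aa_def bb_def ts by simp_all
  have len: "length ts = Suc (length ts')" using ts by simp
  have gsS: "(g # gs) ! Suc k = gs ! k" for k by simp
  let ?P' = "Pm ts' gs {0..<length ts'}"
  have IH: "foldr (mat_mult n) gs mat_id l c = ?P' l c" for l by (rule Cons.IH[OF bt gt Cons.prems(3)])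
  have "foldr (mat_mult n) (g # gs) mat_id r c = (\<Sum>l\<in>{1..n}. g r l * ?P' l c)"
    by (simp add: mat_mult_def IH)
  also have "\<dots> = Pm ts (g # gs) {0..<length ts} r c"
  proof (cases "c = fst t \<or> c = snd t")
    case True
    have out: "\<forall>k\<in>{0..<length ts'}. c \<noteq> aa ts' k \<and> c \<noteq> bb ts' k"
    proof
      fix k assume k: "k \<in> {0..<length ts'}"
      hence "Suc k < length ts" "0 < length ts" "Suc k \<noteq> 0" using len by auto
      from B.disj[OF this] show "c \<noteq> aa ts' k \<and> c \<noteq> bb ts' k" using True a0 aS by auto
    qed
    have "(\<Sum>l\<in>{1..n}. g r l * ?P' l c) = (\<Sum>l\<in>{1..n}. g r l * mat_id l c)"
      using B'.Pm_out[OF out] by simp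
    also have "\<dots> = g r c" using Cons.prems(3) by (intro sum_delta_r) auto
    also have "g r c = Pm ts (g # gs) {0..<length ts} r c"
      using B.Pm_in[of "{0..<length ts}" 0 c "g # gs" r] True a0 len by simp
    finally show ?thesis .
  next
    case False
    have supp: "l \<in> {1..n} \<and> l \<noteq> fst t \<and> l \<noteq> snd t" if nz: "?P' l c \<noteq> 0" for l
    proof (cases "\<exists>k\<in>{0..<length ts'}. c = aa ts' k \<or> c = bb ts' k")
      case True
      then obtain k where k: "k < length ts'" "c = aa ts' k \<or> c = bb ts' k" by auto
      have "?P' l c = (gs ! k) l c" using B'.Pm_in[of "{0..<length ts'}" k c gs l] k by simp
      hence lk: "l = aa ts' k \<or> l = bb ts' k"
        using Lsub_zero[OF B'.gs_k[OF gt k(1)], of c l] k nz by auto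
      have "Suc k < length ts" "0 < length ts" "Suc k \<noteq> 0" using k len by auto
      from B.disj[OF this] have "l \<noteq> fst t \<and> l \<noteq> snd t" using lk a0 aS by auto
      moreover have "l \<in> {1..n}" using B'.ab_in[OF k(1)] lk by auto
      ultimately show ?thesis by simp
    next
      case False
      hence "?P' l c = mat_id l c" using B'.Pm_out by auto
      hence "l = c" using nz unfolding mat_id_def by (auto split: if_splits)
      thus ?thesis using \<open>\<not> (c = fst t \<or> c = snd t)\<close> Cons.prems(3) by auto
    qed
    have "(\<Sum>l\<in>{1..n}. g r l * ?P' l c) = (\<Sum>l\<in>{1..n}. mat_id r l * ?P' l c)"
    proof (rule sum.cong[OF refl])
      fix l assume "l \<in> {1..n}"
      show "g r l * ?P' l c = mat_id r l * ?P' l c"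
      proof (cases "?P' l c = 0")
        case False thus ?thesis using supp[OF False] Lsub_out[OF g, of l r] by auto
      qed simp
    qed
    also have "\<dots> = ?P' r c" using supp[of r] by (auto simp: sum_delta_l)
    also have "?P' r c = Pm ts (g # gs) {0..<length ts} r c"
    proof (cases "\<exists>k\<in>{0..<length ts'}. c = aa ts' k \<or> c = bb ts' k")
      case True
      then obtain k where k: "k < length ts'" "c = aa ts' k \<or> c = bb ts' k" by auto
      have "?P' r c = (gs ! k) r c" using B'.Pm_in[of "{0..<length ts'}" k c gs r] k by simp
      moreover have "Pm ts (g # gs) {0..<length ts} r c = ((g # gs) ! Suc k) r c"
        using B.Pm_in[of "{0..<length ts}" "Suc k" c "g # gs" r] k len aS by simp
      ultimately show ?thesis by simp
    next
      case False
      have "?P' r c = mat_id r c" using False B'.Pm_out by auto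
      moreover have "Pm ts (g # gs) {0..<length ts} r c = mat_id r c"
      proof (rule B.Pm_out, rule ballI)
        fix k assume k: "k \<in> {0..<length ts}"
        show "c \<noteq> aa ts k \<and> c \<noteq> bb ts k"
        proof (cases k)
          case 0 thus ?thesis using \<open>\<not> (c = fst t \<or> c = snd t)\<close> a0 by auto
        next
          case (Suc k') thus ?thesis using False k len aS by auto
        qed
      qed
      ultimately show ?thesis by simp
    qed
    finally show ?thesis .
  qed
  finally show ?case .
qed

lemma perm_mat_id: "perm_mat w l c = mat_id l (w c)" by (simp add: perm_mat_def mat_id_def)

lemma Erep_col:
  assumes w: "w permutes {1..n}" and m: "m \<in> {1..n}"
  shows "mat_mult n F (perm_mat w) r m = F r (w m)"
proof -
  have wm: "w m \<in> {1..n}" using permutes_in_image[OF w] m by simp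
  have "mat_mult n F (perm_mat w) r m = (\<Sum>l\<in>{1..n}. F r l * mat_id l (w m))"
    unfolding mat_mult_def perm_mat_def mat_id_def ..
  also have "\<dots> = F r (w m)" by (rule sum_delta_r[OF wm]) simp
  finally show ?thesis .
qed

lemma M3_entry:
  assumes w: "w permutes {1..n}" and r: "r \<in> {1..n}" and i: "i \<le> n"
  shows "mat_mult n (mat_mult n (mat_mult n (perm_mat w) (t_mat q i)) (perm_mat (inv_into {1..n} w))) g r m
     = dl q i w r * g r m"
proof -
  let ?wi = "inv_into {1..n} w"
  let ?tt = "\<lambda>c. if c \<le> i then 1 else q"
  have img: "w ` {1..n} = {1..n}" using permutes_image[OF w] .
  have inj: "inj_on w {1..n}" using inj_on_subset[OF permutes_inj[OF w] subset_UNIV] .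
  have wi_in: "?wi c \<in> {1..n}" if "c \<in> {1..n}" for c using inv_into_into[of c w "{1..n}"] img that by simp
  have w_wi: "w (?wi c) = c" if "c \<in> {1..n}" for c using f_inv_into_f[of c w "{1..n}"] img that by simp
  have A: "mat_mult n (perm_mat w) (t_mat q i) r c = perm_mat w r c * ?tt c" if c: "c \<in> {1..n}" for r c
  proof -
    have "mat_mult n (perm_mat w) (t_mat q i) r c = (\<Sum>l\<in>{1..n}. (perm_mat w r l * ?tt l) * mat_id l c)"
      unfolding mat_mult_def t_mat_def mat_id_def by (rule sum.cong) auto
    also have "\<dots> = perm_mat w r c * ?tt c" by (rule sum_delta_r[OF c]) simp
    finally show ?thesis .
  qed
  have B: "mat_mult n (mat_mult n (perm_mat w) (t_mat q i)) (perm_mat ?wi) r c = mat_id r c * ?tt (?wi c)"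
    if c: "c \<in> {1..n}" for r c
  proof -
    have "mat_mult n (mat_mult n (perm_mat w) (t_mat q i)) (perm_mat ?wi) r c
        = (\<Sum>l\<in>{1..n}. mat_mult n (perm_mat w) (t_mat q i) r l * mat_id l (?wi c))"
      unfolding mat_mult_def[of n "mat_mult n (perm_mat w) (t_mat q i)"] perm_mat_id ..
    also have "\<dots> = mat_mult n (perm_mat w) (t_mat q i) r (?wi c)" by (rule sum_delta_r[OF wi_in[OF c]]) simp
    also have "\<dots> = perm_mat w r (?wi c) * ?tt (?wi c)" by (rule A[OF wi_in[OF c]])
    also have "perm_mat w r (?wi c) = mat_id r c" unfolding perm_mat_def mat_id_def using w_wi[OF c] by simp
    finally show ?thesis .
  qed
  have "mat_mult n (mat_mult n (mat_mult n (perm_mat w) (t_mat q i)) (perm_mat ?wi)) g r m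
      = (\<Sum>l\<in>{1..n}. mat_id r l * (?tt (?wi l) * g l m))"
    unfolding mat_mult_def[of n "mat_mult n (mat_mult n (perm_mat w) (t_mat q i)) (perm_mat ?wi)"]
  proof (rule sum.cong[OF refl])
    fix l assume l: "l \<in> {1..n}"
    show "mat_mult n (mat_mult n (perm_mat w) (t_mat q i)) (perm_mat ?wi) r l * g l m = mat_id r l * (?tt (?wi l) * g l m)"
      unfolding B[OF l] by simp
  qed
  also have "\<dots> = ?tt (?wi r) * g r m" using sum_delta_l[of "{1..n}" r] r by simp
  also have "?tt (?wi r) = dl q i w r"
  proof -
    have "r \<in> w ` {1..i} \<longleftrightarrow> ?wi r \<le> i"
    proof
      assume "r \<in> w ` {1..i}"
      then obtain m' where m': "m' \<in> {1..i}" "r = w m'" by auto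
      have "m' \<in> {1..n}" using m' i by simp
      hence "?wi r = m'" using inv_into_f_f[OF inj] m' by simp
      thus "?wi r \<le> i" using m' by simp
    next
      assume "?wi r \<le> i"
      moreover have "?wi r \<ge> 1" using wi_in[OF r] by simp
      ultimately show "r \<in> w ` {1..i}" using w_wi[OF r] by (metis atLeastAtMost_iff imageI)
    qed
    thus ?thesis unfolding dl_def by simp
  qed
  finally show ?thesis .
qed

lemma pl_U:
  assumes b: "blocks_ok n ts" and gs: "gs_ok n ts gs" and w: "w permutes {1..n}" and t: "t \<le> n"
  shows "pl_vec n t (mat_mult n (foldr (mat_mult n) gs mat_id) (perm_mat w)) = Xw n t (\<lambda>_. 1) ts gs {0..<length ts} w"
proof
  fix S
  show "pl_vec n t (mat_mult n (foldr (mat_mult n) gs mat_id) (perm_mat w)) S = Xw n t (\<lambda>_. 1) ts gs {0..<length ts} w S"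
    unfolding pl_vec_def Xw_def
  proof (rule wedge_cong)
    fix m r assume m: "m \<in> {1..t}" and r: "r \<in> {1..n}"
    have m': "m \<in> {1..n}" using m t by simp
    have wm: "w m \<in> {1..n}" using permutes_in_image[OF w] m' by simp
    show "mat_mult n (foldr (mat_mult n) gs mat_id) (perm_mat w) r m = 1 * Pm ts gs {0..<length ts} r (w m)"
      unfolding Erep_col[OF w m'] foldr_Pm[OF b gs wm] by simp
  qed
qed

lemma pl_V:
  assumes b: "blocks_ok n ts" and gs: "gs_ok n ts gs" and w: "w permutes {1..n}" and t: "t \<le> n" and i: "i \<le> n"
  shows "pl_vec n t (mat_mult n (mat_mult n (mat_mult n (perm_mat w) (t_mat q i)) (perm_mat (inv_into {1..n} w)))
      (mat_mult n (foldr (mat_mult n) gs mat_id) (perm_mat w))) = Xw n t (dl q i w) ts gs {0..<length ts} w"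
proof
  fix S
  show "pl_vec n t (mat_mult n (mat_mult n (mat_mult n (perm_mat w) (t_mat q i)) (perm_mat (inv_into {1..n} w)))
      (mat_mult n (foldr (mat_mult n) gs mat_id) (perm_mat w))) S = Xw n t (dl q i w) ts gs {0..<length ts} w S"
    unfolding pl_vec_def Xw_def
  proof (rule wedge_cong)
    fix m r assume m: "m \<in> {1..t}" and r: "r \<in> {1..n}"
    have m': "m \<in> {1..n}" using m t by simp
    have wm: "w m \<in> {1..n}" using permutes_in_image[OF w] m' by simp
    show "mat_mult n (mat_mult n (mat_mult n (perm_mat w) (t_mat q i)) (perm_mat (inv_into {1..n} w)))
      (mat_mult n (foldr (mat_mult n) gs mat_id) (perm_mat w)) r m = dl q i w r * Pm ts gs {0..<length ts} r (w m)"
      unfolding M3_entry[OF w r i] Erep_col[OF w m'] foldr_Pm[OF b gs wm] ..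
  qed
qed

lemma base_V:
  assumes mono: "monogressive n ts w" and gs: "gs_ok n ts gs" and i: "i \<le> n" and j: "j \<le> n"
  shows "(\<lambda>ST. Xw n i (\<lambda>_. 1) ts gs {0..<length ts} w (fst ST) * Xw n j (dl q i w) ts gs {0..<length ts} w (snd ST))
     \<in> V_ij n q i j"
proof -
  have w: "w permutes {1..n}" and b: "blocks_ok n ts"
    using mono unfolding monogressive_def orth_iff by auto
  let ?g = "mat_mult n (foldr (mat_mult n) gs mat_id) (perm_mat w)"
  have g: "?g \<in> E_reps n ts w" unfolding E_reps_def using gs unfolding gs_ok_def by blast
  let ?u = "\<lambda>S. 1 * pl_vec n i ?g S"
  let ?v = "\<lambda>T. 1 * pl_vec n j (mat_mult n (mat_mult n (mat_mult n (perm_mat w) (t_mat q i)) (perm_mat (inv_into {1..n} w))) ?g) T"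
  have mem: "tensor ?u ?v \<in> {tensor u v | u v. \<exists>ts w g a b.
      monogressive n ts w \<and> g \<in> E_reps n ts w \<and> a \<noteq> 0 \<and> b \<noteq> 0
      \<and> u = (\<lambda>S. a * pl_vec n i g S)
      \<and> v = (\<lambda>T. b * pl_vec n j
              (mat_mult n (mat_mult n (mat_mult n (perm_mat w) (t_mat q i)) (perm_mat (inv_into {1..n} w))) g) T)}"
    unfolding mem_Collect_eq
    apply (rule exI[of _ ?u], rule exI[of _ ?v], rule conjI[OF refl])
    apply (rule exI[of _ ts], rule exI[of _ w], rule exI[of _ ?g], rule exI[of _ 1], rule exI[of _ 1])
    using mono g by simp
  have "tensor ?u ?v = (\<lambda>ST. Xw n i (\<lambda>_. 1) ts gs {0..<length ts} w (fst ST) * Xw n j (dl q i w) ts gs {0..<length ts} w (snd ST))"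
    unfolding tensor_def pl_U[OF b gs w i] pl_V[OF b gs w j i] by (simp add: fun_eq_iff split_beta)
  thus ?thesis using cs_base[OF mem] unfolding V_ij_def by simp
qed

lemma Pm_upd: "k \<notin> K \<Longrightarrow> Pm ts (gs[k := G]) K = Pm ts gs K"
proof (intro ext)
  fix r c assume k: "k \<notin> K"
  show "Pm ts (gs[k := G]) K r c = Pm ts gs K r c"
  proof (cases "\<exists>l\<in>K. c = aa ts l \<or> c = bb ts l")
    case True
    let ?l = "SOME l. l \<in> K \<and> (c = aa ts l \<or> c = bb ts l)"
    have "?l \<in> K" using someI_ex[of "\<lambda>l. l \<in> K \<and> (c = aa ts l \<or> c = bb ts l)"] True by blast
    hence "?l \<noteq> k" using k by blast
    thus ?thesis unfolding Pm_def using True by simp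
  next
    case False thus ?thesis unfolding Pm_def by simp
  qed
qed

lemma Zf_upd: "k \<notin> K \<Longrightarrow> Zf n q i j ts (gs[k := G]) E K w = Zf n q i j ts gs E K w"
  unfolding Zf_def Xw_def Pm_upd by simp

definition Gm :: "nat \<Rightarrow> nat \<Rightarrow> complex \<Rightarrow> nat \<Rightarrow> nat \<Rightarrow> complex" where
  "Gm x0 y0 s = (\<lambda>r c. mat_id r c + (if r = y0 \<and> c = x0 then s else 0))"

lemma Gm_L: "x0 \<noteq> y0 \<Longrightarrow> {x0, y0} = {a, b} \<Longrightarrow> Gm x0 y0 s \<in> L_sub n (a, b)"
  unfolding L_sub_def Gm_def mat_id_def by (auto simp: doubleton_eq_iff)

context blocks
begin

lemma x0_exists:
  assumes kd: "k < d" and ei: "effw ts k w i" and ej: "effw ts k w j"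
  shows "\<exists>x0. (x0 = aa ts k \<or> x0 = bb ts k) \<and> x0 \<in> w ` {1..i} \<and> Tk ts k x0 \<notin> w ` {1..i}
      \<and> x0 \<in> w ` {1..j} \<and> Tk ts k x0 \<notin> w ` {1..j}"
proof -
  define x0 where "x0 = (if aa ts k \<in> w ` {1..i} then aa ts k else bb ts k)"
  have x0: "x0 = aa ts k \<or> x0 = bb ts k" unfolding x0_def by simp
  have ci: "x0 \<in> w ` {1..i}" "Tk ts k x0 \<notin> w ` {1..i}"
    using ei unfolding x0_def effw_def by auto
  have ejj: "x0 \<in> w ` {1..j} \<longleftrightarrow> Tk ts k x0 \<notin> w ` {1..j}"
    using ej x0 unfolding effw_def by (metis Tk_a Tk_b)
  have c1: "x0 \<in> w ` {1..j}"
  proof (cases "i \<le> j")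
    case True thus ?thesis using ci(1) by auto
  next
    case False
    hence "w ` {1..j} \<subseteq> w ` {1..i}" by (intro image_mono) auto
    thus ?thesis using ejj ci(2) by blast
  qed
  thus ?thesis using x0 ci ejj by blast
qed

lemma sup:
  assumes mono: "monogressive n ts w0" and eff: "\<forall>k<d. effw ts k w0 i \<and> effw ts k w0 j"
    and q: "q \<noteq> 0" and i: "i \<le> n" and j: "j \<le> n"
  shows "E \<subseteq> {0..<d} \<Longrightarrow> \<forall>gs. gs_ok n ts gs \<longrightarrow> Zf n q i j ts gs E ({0..<d} - E) w0 \<in> V_ij n q i j"
proof (induction E rule: infinite_finite_induct)
  case (infinite E) thus ?case using finite_subset by blast
next
  case empty
  show ?case
  proof (intro allI impI)
    fix gs assume gs: "gs_ok n ts gs"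
    have "Zf n q i j ts gs {} ({0..<d} - {}) w0 = (\<lambda>ST. Xw n i (\<lambda>_. 1) ts gs {0..<length ts} w0 (fst ST) * Xw n j (dl q i w0) ts gs {0..<length ts} w0 (snd ST))"
      unfolding Zf_def by (simp add: sp_empty)
    thus "Zf n q i j ts gs {} ({0..<d} - {}) w0 \<in> V_ij n q i j" using base_V[OF mono gs i j] by simp
  qed
next
  case (insert k E)
  show ?case
  proof (intro allI impI)
    fix gs assume gs: "gs_ok n ts gs"
    have kd: "k < d" and E: "E \<subseteq> {0..<d}" using insert.prems by auto
    have kE: "k \<notin> E" by (rule insert.hyps(2))
    have IH: "\<And>gs. gs_ok n ts gs \<Longrightarrow> Zf n q i j ts gs E ({0..<d} - E) w0 \<in> V_ij n q i j"
      using insert.IH[OF E] by blast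
    let ?K' = "{0..<d} - insert k E"
    have K': "?K' \<subseteq> {0..<d}" "k \<notin> ?K'" by auto
    have KK: "{0..<d} - E = insert k ?K'" using kd kE by auto
    have w0: "w0 permutes {1..n}" using mono unfolding monogressive_def is_orthocell_def by (elim conjE)
    obtain x0 where x0: "x0 = aa ts k \<or> x0 = bb ts k" and c: "x0 \<in> w0 ` {1..i}" "Tk ts k x0 \<notin> w0 ` {1..i}"
      "x0 \<in> w0 ` {1..j}" "Tk ts k x0 \<notin> w0 ` {1..j}"
    proof -
      have "effw ts k w0 i" "effw ts k w0 j" using eff kd by auto
      from x0_exists[OF kd this] show ?thesis using that by blast
    qed
    have ab: "aa ts k \<noteq> bb ts k" using ab_in[OF kd] by simp
    have xy: "x0 \<noteq> Tk ts k x0" using x0 ab by auto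
    have xyab: "{x0, Tk ts k x0} = {aa ts k, bb ts k}" using x0 by auto
    have lg: "length gs = d" using gs unfolding gs_ok_def by simp
    define gss where "gss s = gs[k := Gm x0 (Tk ts k x0) s]" for s
    have gss_ok: "gs_ok n ts (gss s)" for s
      unfolding gs_ok_def
    proof (intro conjI allI impI)
      show "length (gss s) = d" unfolding gss_def using lg by simp
      fix l assume l: "l < d"
      show "gss s ! l \<in> L_sub n (ts ! l)"
      proof (cases "l = k")
        case True
        have "ts ! k = (aa ts k, bb ts k)" unfolding aa_def bb_def by simp
        thus ?thesis using True Gm_L[OF xy xyab, of s n] unfolding gss_def using lg kd by simp
      next
        case False thus ?thesis using gs l unfolding gss_def gs_ok_def by simp
      qed
    qed
    have gk: "gss s ! k = Gm x0 (Tk ts k x0) s" for s unfolding gss_def using kd lg by simp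
    have g1: "Gm x0 (Tk ts k x0) s x0 x0 = 1" for s unfolding Gm_def mat_id_def using xy by simp
    have g2: "Gm x0 (Tk ts k x0) s (Tk ts k x0) x0 = s" for s unfolding Gm_def mat_id_def using xy by simp
    have step: "Zf n q i j ts (gss s) E ({0..<d} - E) w0 ST = Zf n q i j ts gs E ?K' w0 ST
        + s * Zf n q i j ts gs (insert k E) ?K' w0 ST + q * s\<^sup>2 * Zf n q i j ts gs E ?K' (Tk ts k \<circ> w0) ST" for s ST
    proof -
      have up: "Zf n q i j ts (gss s) X ?K' v = Zf n q i j ts gs X ?K' v" for X v
        unfolding gss_def by (rule Zf_upd[OF K'(2)])
      show ?thesis unfolding KK using Zf_both[OF gss_ok K'(1) kd K'(2) E kE w0 x0 c, of q s ST]
        unfolding gk g1 g2 up by simp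
    qed
    have m1: "Zf n q i j ts (gss 1) E ({0..<d} - E) w0 \<in> V_ij n q i j" by (rule IH[OF gss_ok])
    have m2: "Zf n q i j ts (gss (-1)) E ({0..<d} - E) w0 \<in> V_ij n q i j" by (rule IH[OF gss_ok])
    have eq: "Zf n q i j ts gs (insert k E) ({0..<d} - insert k E) w0
       = (\<lambda>ST. (1/2) * Zf n q i j ts (gss 1) E ({0..<d} - E) w0 ST + (-1/2) * Zf n q i j ts (gss (-1)) E ({0..<d} - E) w0 ST)"
      unfolding step by (simp add: fun_eq_iff algebra_simps)
    show "Zf n q i j ts gs (insert k E) ({0..<d} - insert k E) w0 \<in> V_ij n q i j"
      unfolding eq using m1 m2 unfolding V_ij_def by (rule cs_lin2)
  qed
qed

lemma subl_all: "subl ts {0..<d} = ts"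
  unfolding subl_def by (simp add: map_nth)

end


theorem mainTheorem6:
  fixes n i j :: nat and q :: complex
  assumes "n \<ge> 2" and "q \<noteq> 0" and "\<forall>k::nat. k > 0 \<longrightarrow> q ^ k \<noteq> 1"
    and "1 \<le> i" and "i \<le> n - 1" and "1 \<le> j" and "j \<le> n - 1"
  shows "V_ij n q i j = cspan {e_C n q i j ts w | ts w. ij_effective n i j ts w}"
proof
  have q: "q \<noteq> 0" by (rule assms(2))
  have i: "i \<le> n" and j: "j \<le> n" using assms by auto
  let ?T = "{e_C n q i j ts w | ts w. ij_effective n i j ts w}"
  let ?Gen = "{tensor u v | u v. \<exists>ts w g a b.
      monogressive n ts w \<and> g \<in> E_reps n ts w \<and> a \<noteq> 0 \<and> b \<noteq> 0
      \<and> u = (\<lambda>S. a * pl_vec n i g S)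
      \<and> v = (\<lambda>T. b * pl_vec n j
              (mat_mult n (mat_mult n (mat_mult n (perm_mat w) (t_mat q i)) (perm_mat (inv_into {1..n} w))) g) T)}"
  have VG: "V_ij n q i j = cspan ?Gen" unfolding V_ij_def ..
  show "V_ij n q i j \<subseteq> cspan ?T"
    unfolding VG
  proof (rule cs_minimal, rule subsetI)
    fix x assume "x \<in> ?Gen"
    then obtain u v ts w g a b where x: "x = tensor u v" and mono: "monogressive n ts w"
      and g: "g \<in> E_reps n ts w" and u: "u = (\<lambda>S. a * pl_vec n i g S)"
      and v: "v = (\<lambda>T. b * pl_vec n j
              (mat_mult n (mat_mult n (mat_mult n (perm_mat w) (t_mat q i)) (perm_mat (inv_into {1..n} w))) g) T)"
      by blast
    obtain gs where gdef: "g = mat_mult n (foldr (mat_mult n) gs mat_id) (perm_mat w)" and gs: "gs_ok n ts gs"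
      using g unfolding E_reps_def gs_ok_def by blast
    have w: "w permutes {1..n}" and b: "blocks_ok n ts"
      using mono unfolding monogressive_def orth_iff by auto
    interpret B: blocks n ts by (rule blocks.intro[OF b])
    have "Zf n q i j ts gs {} {0..<length ts} (s_prod ts {} \<circ> w) \<in> cspan ?T"
      using B.incl[OF mono gs q j, of "{0..<length ts}"] by simp
    hence Z: "Zf n q i j ts gs {} {0..<length ts} w \<in> cspan ?T" by (simp add: B.sp_empty)
    have "x = (\<lambda>ST. (a * b) * Zf n q i j ts gs {} {0..<length ts} w ST)"
      unfolding x u v gdef pl_U[OF b gs w i] pl_V[OF b gs w j i] tensor_def Zf_def
      by (simp add: fun_eq_iff B.sp_empty split_beta)
    thus "x \<in> cspan ?T" using cs_scale[OF Z] by simp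
  qed
  show "cspan ?T \<subseteq> V_ij n q i j"
    unfolding VG
  proof (rule cs_minimal, rule subsetI)
    fix x assume "x \<in> ?T"
    then obtain ts w where x: "x = e_C n q i j ts w" and eff: "ij_effective n i j ts w" by blast
    have mono: "monogressive n ts w" using eff unfolding ij_effective_def by blast
    have w: "w permutes {1..n}" and b: "blocks_ok n ts"
      using mono unfolding monogressive_def orth_iff by auto
    interpret B: blocks n ts by (rule blocks.intro[OF b])
    have effk: "\<forall>k<length ts. effw ts k w i \<and> effw ts k w j"
    proof (intro allI impI)
      fix k assume k: "k < length ts"
      have e: "transpose (aa ts k) (bb ts k) ` (w ` {1..m}) \<noteq> w ` {1..m}" if "m \<in> {i, j}" for m
        using eff k that unfolding ij_effective_def aa_def bb_def by blast
      have "effw ts k w m" if "m \<in> {i, j}" for m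
      proof (rule ccontr)
        assume "\<not> effw ts k w m"
        hence "aa ts k \<in> w ` {1..m} \<longleftrightarrow> bb ts k \<in> w ` {1..m}" unfolding effw_def by blast
        hence "transpose (aa ts k) (bb ts k) ` (w ` {1..m}) = w ` {1..m}" by (rule transpose_image_eq)
        thus False using e[OF that] by simp
      qed
      thus "effw ts k w i \<and> effw ts k w j" by simp
    qed
    let ?gs = "replicate (length ts) mat_id"
    have gs: "gs_ok n ts ?gs"
      unfolding gs_ok_def
    proof (intro conjI allI impI)
      fix k assume k: "k < length ts"
      have "ts ! k = (aa ts k, bb ts k)" unfolding aa_def bb_def by simp
      moreover have "aa ts k \<noteq> bb ts k" using B.ab_in[OF k] by simp
      ultimately show "?gs ! k \<in> L_sub n (ts ! k)" using k unfolding L_sub_def mat_id_def by auto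
    qed simp
    have "Zf n q i j ts ?gs {0..<length ts} ({0..<length ts} - {0..<length ts}) w \<in> V_ij n q i j"
      using B.sup[OF mono effk q i j, of "{0..<length ts}"] gs by blast
    hence Z: "Zf n q i j ts ?gs {0..<length ts} {} w \<in> cspan ?Gen" unfolding VG by simp
    have xe: "x = (\<lambda>ST. (1 / q ^ (j - i)) * Zf n q i j ts ?gs {0..<length ts} {} w ST)"
      unfolding x B.Zf_empty[OF subset_refl w j] B.subl_all using q by (simp add: fun_eq_iff)
    show "x \<in> cspan ?Gen" unfolding xe by (rule cs_scale[OF Z])
  qed
qed

end
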